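(* For the erased fair coin flips source and $(d_s,d_x)\in\mathcal D_{\mathrm{in}}$, any $(k,M,d_s,d_x,\epsilon)$ code must satisfy \[\epsilon\ge\sup_{\gamma\ge0}\Bigg\{\mathbb P\Bigg[\sum_{i=1}^k\Big(\jmath_X(X_i,d_s,d_x)+\lambda_s^\star\big(\mathsf d_s(S_i,0)-\bar{\mathsf d}_s(X_i,0)\big)\Big)\ge\gamma+\log M\Bigg]-\exp(-\gamma)\Bigg\},\] where $\{(S_i,X_i)\}_{i=1}^k$ are i.i.d. drawn from the EFCF source, $\mathsf d_s(s,z)=1\{s\ne z\}$, and $\bar{\mathsf d}_s(x,z)=1\{x\ne z\}$ if $x\ne e$, $\bar{\mathsf d}_s(e,z)=1/2$.
   Context: EFCF source: $S$ uniform on $\{0,1\}$; $X\in\{0,1,e\}$ equals $S$ w.p. $1-\delta$ and $e$ w.p. $\delta$. Single-letter reconstructions $Z\in\{0,1\}$, $Y\in\{0,1,e\}$, Hamming distortions $\mathsf d_s(s,z)=1\{s\ne z\}$, $\mathsf d_x(x,y)=1\{x\ne y\}$; block distortions are the normalized sums. A $(k,M,d_s,d_x,\epsilon)$ code is a random encoder $P_{U|X^k}$ into $\{1,\dots,M\}$ and random decoder $P_{Z^kY^k|U}$ with $\mathbb P[\mathsf d_s(S^k,Z^k)>d_s\text{ or }\mathsf d_x(X^k,Y^k)>d_x]\le\epsilon$. Single-letter quantities: $\bar{\mathsf d}_s(x,z)=\mathbb E[\mathsf d_s(S,z)\mid X=x]$; $R(d_s,d_x)=\min_{P_{ZY|X}}I(X;Z,Y)$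 s.t. $\mathbb E[\bar{\mathsf d}_s(X,Z)]\le d_s$, $\mathbb E[\mathsf d_x(X,Y)]\le d_x$, with minimizer set $\mathcal P^\star$. With $\mathcal D_{\mathrm{adm}}=\{d_s\ge\mathbb E[\min_z\bar{\mathsf d}_s(X,z)],\ d_x\ge\mathbb E[\min_y\mathsf d_x(X,y)]\}$, partition it into $\mathcal D_{sx}$ (every minimizer tight in both constraints), $\mathcal D_{\bar sx}$ (some minimizer strict in $s$, every minimizer tight in $x$), $\mathcal D_{s\bar x}$ (every minimizer tight in $s$, some strict in $x$), $\mathcal D_{\bar s\bar x}$ (some minimizer strict in $s$, some strict in $x$); $\mathcal D_{\mathrm{in}}$ is the union of the interiors, on which $R$ is differentiable; $\lambda_s^\star=-\partial R/\partial d_s$, $\lambda_x^\star=-\partial R/\partial d_x$. Fix a minimizer $P_{Z^\star Y^\star|X}$ with output marginal $P_{Z^\star Y^\star}$; $\jmath_X(x,d_s,d_x)=-\log\mathbb E[\exp\{\lambda_s^\star d_s+\lambda_x^\star d_x-\lambda_s^\star\bar{\mathsf d}_s(x,Z^\star)-\lambda_x^\star\mathsf d_x(x,Y^\star)\}]$ (expectation over $P_{Z^\star Y^\star}$). $\log,\exp$ to a common base. *)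

theory Defs
  imports "HOL-Analysis.Analysis" "HOL-Probability.Probability"
begin

text \<open>Conventions: source bit S and reconstruction Z are bool (0 = False, 1 = True);
  X and Y range over option bool, where None is the erasure symbol e and
  Some b is the bit b.\<close>

type_synonym sym = "bool option"

definition efcf :: "real \<Rightarrow> (bool \<times> sym) pmf" where
  "efcf \<delta> = do { s \<leftarrow> bernoulli_pmf (1/2); er \<leftarrow> bernoulli_pmf \<delta>;
                 return_pmf (s, if er then None else Some s) }"

definition efcfX :: "real \<Rightarrow> sym pmf" where
  "efcfX \<delta> = map_pmf snd (efcf \<delta>)"

definition d_s :: "bool \<Rightarrow> bool \<Rightarrow> real" where
  "d_s s z = (if s \<noteq> z then 1 else 0)"

definition d_x :: "sym \<Rightarrow> sym \<Rightarrow> real" where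
  "d_x x y = (if x \<noteq> y then 1 else 0)"

definition dbar_s :: "sym \<Rightarrow> bool \<Rightarrow> real" where
  "dbar_s x z = (case x of None \<Rightarrow> 1/2 | Some b \<Rightarrow> (if b \<noteq> z then 1 else 0))"

definition blk_ds :: "nat \<Rightarrow> (nat \<Rightarrow> bool) \<Rightarrow> (nat \<Rightarrow> bool) \<Rightarrow> real" where
  "blk_ds k s z = (\<Sum>i<k. d_s (s i) (z i)) / real k"

definition blk_dx :: "nat \<Rightarrow> (nat \<Rightarrow> sym) \<Rightarrow> (nat \<Rightarrow> sym) \<Rightarrow> real" where
  "blk_dx k x y = (\<Sum>i<k. d_x (x i) (y i)) / real k"

definition efcf_block :: "real \<Rightarrow> nat \<Rightarrow> (nat \<Rightarrow> bool \<times> sym) pmf" where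
  "efcf_block \<delta> k = Pi_pmf {..<k} (False, None) (\<lambda>_. efcf \<delta>)"

definition is_code ::
  "real \<Rightarrow> nat \<Rightarrow> nat \<Rightarrow> real \<Rightarrow> real \<Rightarrow> real \<Rightarrow>
   ((nat \<Rightarrow> sym) \<Rightarrow> nat pmf) \<Rightarrow> (nat \<Rightarrow> ((nat \<Rightarrow> bool) \<times> (nat \<Rightarrow> sym)) pmf) \<Rightarrow> bool" where
  "is_code \<delta> k M ds dx \<epsilon> enc dec \<longleftrightarrow>
     (\<forall>x. set_pmf (enc x) \<subseteq> {1..M}) \<and>
     measure_pmf.prob
       (do { v \<leftarrow> efcf_block \<delta> k; u \<leftarrow> enc (\<lambda>i. snd (v i)); zy \<leftarrow> dec u; return_pmf (v, zy) })
       {(v, (z, y)). blk_ds k (\<lambda>i. fst (v i)) z > ds \<or> blk_dx k (\<lambda>i. snd (v i)) y > dx}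
     \<le> \<epsilon>"

type_synonym chan = "sym \<Rightarrow> (bool \<times> sym) pmf"

definition Eds :: "real \<Rightarrow> chan \<Rightarrow> real" where
  "Eds \<delta> W = (\<Sum>x\<in>UNIV. pmf (efcfX \<delta>) x * (\<Sum>zy\<in>UNIV. pmf (W x) zy * dbar_s x (fst zy)))"

definition Edx :: "real \<Rightarrow> chan \<Rightarrow> real" where
  "Edx \<delta> W = (\<Sum>x\<in>UNIV. pmf (efcfX \<delta>) x * (\<Sum>zy\<in>UNIV. pmf (W x) zy * d_x x (snd zy)))"

definition out_marg :: "real \<Rightarrow> chan \<Rightarrow> (bool \<times> sym) \<Rightarrow> real" where
  "out_marg \<delta> W zy = (\<Sum>x\<in>UNIV. pmf (efcfX \<delta>) x * pmf (W x) zy)"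

definition MI :: "real \<Rightarrow> chan \<Rightarrow> real" where
  "MI \<delta> W = (\<Sum>x\<in>UNIV. \<Sum>zy\<in>UNIV.
      pmf (efcfX \<delta>) x * pmf (W x) zy * ln (pmf (W x) zy / out_marg \<delta> W zy))"

definition feasible :: "real \<Rightarrow> real \<Rightarrow> real \<Rightarrow> chan \<Rightarrow> bool" where
  "feasible \<delta> ds dx W \<longleftrightarrow> Eds \<delta> W \<le> ds \<and> Edx \<delta> W \<le> dx"

definition Rfun :: "real \<Rightarrow> real \<Rightarrow> real \<Rightarrow> real" where
  "Rfun \<delta> ds dx = Inf {MI \<delta> W | W. feasible \<delta> ds dx W}"

definition Pstar :: "real \<Rightarrow> real \<Rightarrow> real \<Rightarrow> chan set" where
  "Pstar \<delta> ds dx = {W. feasible \<delta> ds dx W \<and> MI \<delta> W = Rfun \<delta> ds dx}"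

definition Dadm :: "real \<Rightarrow> (real \<times> real) set" where
  "Dadm \<delta> = {(ds, dx).
      ds \<ge> (\<Sum>x\<in>UNIV. pmf (efcfX \<delta>) x * min (dbar_s x False) (dbar_s x True)) \<and>
      dx \<ge> (\<Sum>x\<in>UNIV. pmf (efcfX \<delta>) x * Min (range (d_x x)))}"

definition D_sx :: "real \<Rightarrow> (real \<times> real) set" where
  "D_sx \<delta> = {(ds, dx) \<in> Dadm \<delta>.
      \<forall>W\<in>Pstar \<delta> ds dx. Eds \<delta> W = ds \<and> Edx \<delta> W = dx}"

definition D_sbar_x :: "real \<Rightarrow> (real \<times> real) set" where
  "D_sbar_x \<delta> = {(ds, dx) \<in> Dadm \<delta>.
      (\<exists>W\<in>Pstar \<delta> ds dx. Eds \<delta> W < ds) \<and> (\<forall>W\<in>Pstar \<delta> ds dx. Edx \<delta> W = dx)}"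

definition D_s_xbar :: "real \<Rightarrow> (real \<times> real) set" where
  "D_s_xbar \<delta> = {(ds, dx) \<in> Dadm \<delta>.
      (\<forall>W\<in>Pstar \<delta> ds dx. Eds \<delta> W = ds) \<and> (\<exists>W\<in>Pstar \<delta> ds dx. Edx \<delta> W < dx)}"

definition D_sbar_xbar :: "real \<Rightarrow> (real \<times> real) set" where
  "D_sbar_xbar \<delta> = {(ds, dx) \<in> Dadm \<delta>.
      (\<exists>W\<in>Pstar \<delta> ds dx. Eds \<delta> W < ds) \<and> (\<exists>W\<in>Pstar \<delta> ds dx. Edx \<delta> W < dx)}"

definition D_in :: "real \<Rightarrow> (real \<times> real) set" where
  "D_in \<delta> = interior (D_sx \<delta>) \<union> interior (D_sbar_x \<delta>) \<union>
             interior (D_s_xbar \<delta>) \<union> interior (D_sbar_xbar \<delta>)"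

definition lam_s :: "real \<Rightarrow> real \<Rightarrow> real \<Rightarrow> real" where
  "lam_s \<delta> ds dx = - deriv (\<lambda>t. Rfun \<delta> t dx) ds"

definition lam_x :: "real \<Rightarrow> real \<Rightarrow> real \<Rightarrow> real" where
  "lam_x \<delta> ds dx = - deriv (\<lambda>t. Rfun \<delta> ds t) dx"

definition jX :: "real \<Rightarrow> chan \<Rightarrow> sym \<Rightarrow> real \<Rightarrow> real \<Rightarrow> real" where
  "jX \<delta> W x ds dx = - ln (\<Sum>zy\<in>UNIV. out_marg \<delta> W zy *
      exp (lam_s \<delta> ds dx * ds + lam_x \<delta> ds dx * dx
           - lam_s \<delta> ds dx * dbar_s x (fst zy) - lam_x \<delta> ds dx * d_x x (snd zy)))"

end

theory Submission
  imports Defs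
begin


lemma prob_bernoulli_set:
  assumes "0 \<le> p" "p \<le> 1"
  shows "measure_pmf.prob (bernoulli_pmf p) A = (if True \<in> A then p else 0) + (if False \<in> A then 1 - p else 0)"
proof -
  have "measure_pmf.prob (bernoulli_pmf p) A = (\<Sum>x\<in>A. pmf (bernoulli_pmf p) x)"
    by (rule measure_measure_pmf_finite) simp
  also have "\<dots> = (\<Sum>x\<in>A \<inter> {True}. pmf (bernoulli_pmf p) x) + (\<Sum>x\<in>A \<inter> {False}. pmf (bernoulli_pmf p) x)"
    by (subst sum.union_disjoint[symmetric]) (auto intro: sum.cong)
  finally show ?thesis using assms by (auto simp: Int_insert_right)
qed

lemma pmf_efcfX:
  assumes "0 \<le> \<delta>" "\<delta> \<le> 1"
  shows "pmf (efcfX \<delta>) x = (case x of None \<Rightarrow> \<delta> | Some b \<Rightarrow> (1 - \<delta>) / 2)"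
proof -
  have "efcfX \<delta> = bind_pmf (bernoulli_pmf (1/2)) (\<lambda>s. map_pmf (\<lambda>er. if er then None else Some s) (bernoulli_pmf \<delta>))"
    unfolding efcfX_def efcf_def map_pmf_def by (simp add: bind_assoc_pmf bind_return_pmf)
  then show ?thesis using assms
    by (auto simp: pmf_bind pmf_map prob_bernoulli_set vimage_def split: option.splits if_splits)
qed


lemma ln_ratio_ge:
  fixes a c :: real assumes "a > 0" "c > 0"
  shows "ln a - ln c \<ge> 1 - c / a"
proof -
  have "ln (c / a) \<le> c / a - 1" using assms by (intro ln_le_minus_one) simp
  then show ?thesis using assms by (simp add: ln_div)
qed

lemma log_sum_ineq:
  fixes u w :: "'i \<Rightarrow> real"
  assumes fin: "finite I" and u0: "\<And>i. i \<in> I \<Longrightarrow> 0 \<le> u i" and w0: "\<And>i. i \<in> I \<Longrightarrow> 0 \<le> w i"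
    and uw: "\<And>i. i \<in> I \<Longrightarrow> u i > 0 \<Longrightarrow> w i > 0"
  shows "(\<Sum>i\<in>I. u i) * ln ((\<Sum>i\<in>I. u i) / (\<Sum>i\<in>I. w i)) \<le> (\<Sum>i\<in>I. u i * ln (u i / w i))"
proof (cases "(\<Sum>i\<in>I. u i) = 0")
  case True
  then have "\<forall>i\<in>I. u i = 0" using sum_nonneg_eq_0_iff[OF fin] u0 by blast
  then show ?thesis using True by simp
next
  case False
  define U where "U = (\<Sum>i\<in>I. u i)"
  define Wt where "Wt = (\<Sum>i\<in>I. w i)"
  have U0: "U > 0" using False u0 sum_nonneg[of I u] unfolding U_def by force
  obtain j where j: "j \<in> I" "u j > 0"
    using False u0 by (metis (no_types, lifting) order_le_less sum.neutral)
  have W0: "Wt > 0"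
  proof -
    have "w j \<le> Wt" unfolding Wt_def using fin j w0 by (intro member_le_sum) auto
    then show ?thesis using uw[OF j] by simp
  qed
  have trm: "u i * ln (u i / w i) \<ge> u i * ln (U / Wt) + u i - w i * U / Wt" if i: "i \<in> I" for i
  proof (cases "u i = 0")
    case True then show ?thesis using w0[OF i] U0 W0 by simp
  next
    case False
    then have ui: "u i > 0" using u0[OF i] by simp
    have wi: "w i > 0" using uw[OF i ui] .
    have "ln (u i / w i) - ln (U / Wt) \<ge> 1 - (U / Wt) / (u i / w i)"
      by (rule ln_ratio_ge) (use ui wi U0 W0 in auto)
    then have "u i * (ln (u i / w i) - ln (U / Wt)) \<ge> u i * (1 - (U / Wt) / (u i / w i))"
      using ui by (intro mult_left_mono) auto
    moreover have "u i * (1 - (U / Wt) / (u i / w i)) = u i - w i * U / Wt"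
      using ui wi W0 by (simp add: field_simps)
    ultimately show ?thesis by (simp add: algebra_simps)
  qed
  have "(\<Sum>i\<in>I. u i * ln (u i / w i)) \<ge> (\<Sum>i\<in>I. u i * ln (U / Wt) + u i - w i * U / Wt)"
    by (rule sum_mono) (use trm in auto)
  also have "(\<Sum>i\<in>I. u i * ln (U / Wt) + u i - w i * U / Wt) = U * ln (U / Wt) + U - Wt * U / Wt"
    unfolding U_def Wt_def by (simp add: sum.distrib sum_subtractf sum_distrib_right sum_divide_distrib)
  also have "\<dots> = U * ln (U / Wt)" using W0 by simp
  finally show ?thesis unfolding U_def Wt_def by simp
qed

lemma gibbs_eq:
  fixes p q :: "'i \<Rightarrow> real"
  assumes fin: "finite I" and p0: "\<And>i. i \<in> I \<Longrightarrow> 0 \<le> p i" and q0: "\<And>i. i \<in> I \<Longrightarrow> 0 \<le> q i"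
    and pq: "\<And>i. i \<in> I \<Longrightarrow> p i > 0 \<Longrightarrow> q i > 0"
    and sp: "(\<Sum>i\<in>I. p i) = 1" and sq: "(\<Sum>i\<in>I. q i) = 1"
    and le: "(\<Sum>i\<in>I. p i * ln (p i / q i)) \<le> 0"
    and i: "i \<in> I"
  shows "p i = q i"
proof -
  define t where "t = (\<lambda>i. p i * ln (p i / q i) - (p i - q i))"
  have t0: "t i \<ge> 0" if i: "i \<in> I" for i
  proof (cases "p i = 0")
    case True then show ?thesis using q0[OF i] by (simp add: t_def)
  next
    case False
    then have pi: "p i > 0" using p0[OF i] by simp
    have qi: "q i > 0" using pq[OF i pi] .
    have "ln (p i) - ln (q i) \<ge> 1 - q i / p i" by (rule ln_ratio_ge) (use pi qi in auto)
    then have "p i * (ln (p i) - ln (q i)) \<ge> p i * (1 - q i / p i)" using pi by (intro mult_left_mono) auto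
    moreover have "p i * (1 - q i / p i) = p i - q i" using pi by (simp add: field_simps)
    ultimately show ?thesis using pi qi by (simp add: t_def ln_div)
  qed
  have "(\<Sum>i\<in>I. t i) = (\<Sum>i\<in>I. p i * ln (p i / q i)) - (\<Sum>i\<in>I. p i) + (\<Sum>i\<in>I. q i)"
    by (simp add: t_def sum_subtractf sum.distrib)
  also have "\<dots> \<le> 0" using le sp sq by simp
  finally have "(\<Sum>i\<in>I. t i) = 0" using sum_nonneg[of I t] t0 by force
  then have ti: "t i = 0" using sum_nonneg_eq_0_iff[OF fin] t0 i by blast
  show ?thesis
  proof (cases "p i = 0")
    case True then show ?thesis using ti by (simp add: t_def)
  next
    case False
    then have pi: "p i > 0" using p0[OF i] by simp
    have qi: "q i > 0" by (rule pq[OF i pi])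
    have "p i * ln (p i / q i) = p i - q i" using ti by (simp add: t_def)
    then have "ln (p i / q i) = 1 - q i / p i" using pi by (simp add: field_simps)
    then have "ln (q i / p i) = q i / p i - 1" using pi qi by (simp add: ln_div)
    then have "q i / p i = 1" using pi qi by (intro ln_eq_minus_one) auto
    then show ?thesis using pi by simp
  qed
qed

lemma pmf_embed_finite:
  fixes f :: "'a::finite \<Rightarrow> real"
  assumes "\<And>x. 0 \<le> f x" "(\<Sum>x\<in>UNIV. f x) = 1"
  shows "pmf (embed_pmf f) x = f x"
proof (rule pmf_embed_pmf)
  show "\<And>x. 0 \<le> f x" by fact
  show "(\<integral>\<^sup>+x. ennreal (f x) \<partial>count_space UNIV) = 1"
    using assms by (simp add: nn_integral_count_space_finite sum_ennreal[symmetric])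
qed


lemma pmf_map_finite:
  fixes f :: "'a::finite \<Rightarrow> 'b"
  shows "pmf (map_pmf f p) y = (\<Sum>r\<in>{r. f r = y}. pmf p r)"
  by (simp add: pmf_map measure_measure_pmf_finite vimage_def)

lemma sum_group_UNIV:
  fixes f :: "'a::finite \<Rightarrow> 'b::finite"
  shows "(\<Sum>y\<in>UNIV. \<Sum>r\<in>{r. f r = y}. h r) = (\<Sum>r\<in>UNIV. h r)"
  using sum.group[of UNIV UNIV f h] by simp

lemma sum_map_pmf_finite:
  fixes f :: "'a::finite \<Rightarrow> 'b::finite"
  shows "(\<Sum>y\<in>UNIV. pmf (map_pmf f p) y * g y) = (\<Sum>r\<in>UNIV. pmf p r * g (f r))"
proof -
  have "(\<Sum>y\<in>UNIV. pmf (map_pmf f p) y * g y) = (\<Sum>y\<in>UNIV. \<Sum>r\<in>{r. f r = y}. pmf p r * g (f r))"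
    by (intro sum.cong refl) (simp add: pmf_map_finite sum_distrib_right)
  also have "\<dots> = (\<Sum>r\<in>UNIV. pmf p r * g (f r))" by (rule sum_group_UNIV)
  finally show ?thesis .
qed

lemma sum_pmf_finite: "(\<Sum>r\<in>(UNIV::'a::finite set). pmf p r) = 1"
  by (simp add: sum_pmf_eq_1)

context
  fixes \<delta> :: real
  assumes d0: "0 \<le> \<delta>" and d1: "\<delta> \<le> 1"
begin

abbreviation "PX x \<equiv> pmf (efcfX \<delta>) x"

lemma PX_sum: "(\<Sum>x\<in>UNIV. PX x) = 1" by (rule sum_pmf_finite)

lemma out_nonneg: "0 \<le> out_marg \<delta> V r"
  unfolding out_marg_def by (intro sum_nonneg mult_nonneg_nonneg) auto

lemma out_sum: "(\<Sum>r\<in>UNIV. out_marg \<delta> V r) = 1"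
proof -
  have "(\<Sum>r\<in>UNIV. out_marg \<delta> V r) = (\<Sum>x\<in>UNIV. PX x * (\<Sum>r\<in>UNIV. pmf (V x) r))"
    unfolding out_marg_def by (subst sum.swap) (simp add: sum_distrib_left)
  also have "\<dots> = 1" by (simp add: sum_pmf_finite PX_sum)
  finally show ?thesis .
qed

lemma out_ge: "PX x * pmf (V x) r \<le> out_marg \<delta> V r"
  unfolding out_marg_def by (rule member_le_sum[where f="\<lambda>x. PX x * pmf (V x) r"]) auto

lemma out_pos: "PX x > 0 \<Longrightarrow> pmf (V x) r > 0 \<Longrightarrow> out_marg \<delta> V r > 0"
  using out_ge[of x V r] by (smt (verit) mult_pos_pos)

lemma MI_map: "MI \<delta> (\<lambda>x. map_pmf f (V x)) \<le> MI \<delta> V"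
proof -
  let ?V' = "\<lambda>x. map_pmf f (V x)"
  have out': "out_marg \<delta> ?V' y = (\<Sum>r\<in>{r. f r = y}. out_marg \<delta> V r)" for y
    unfolding out_marg_def pmf_map_finite by (subst sum.swap) (simp add: sum_distrib_left)
  have step: "PX x * pmf (?V' x) y * ln (pmf (?V' x) y / out_marg \<delta> ?V' y)
      \<le> (\<Sum>r\<in>{r. f r = y}. PX x * pmf (V x) r * ln (pmf (V x) r / out_marg \<delta> V r))" for x y
  proof (cases "PX x = 0")
    case True then show ?thesis by simp
  next
    case False
    then have px: "PX x > 0" using pmf_nonneg[of "efcfX \<delta>" x] by linarith
    have ls: "(\<Sum>r\<in>{r. f r = y}. PX x * pmf (V x) r) * ln ((\<Sum>r\<in>{r. f r = y}. PX x * pmf (V x) r) / (\<Sum>r\<in>{r. f r = y}. PX x * out_marg \<delta> V r))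
        \<le> (\<Sum>r\<in>{r. f r = y}. PX x * pmf (V x) r * ln (PX x * pmf (V x) r / (PX x * out_marg \<delta> V r)))"
      by (rule log_sum_ineq) (use px out_nonneg out_pos in \<open>auto simp: zero_less_mult_iff\<close>)
    have e1: "(\<Sum>r\<in>{r. f r = y}. PX x * pmf (V x) r) = PX x * pmf (?V' x) y"
      by (simp add: pmf_map_finite sum_distrib_left)
    have e2: "(\<Sum>r\<in>{r. f r = y}. PX x * out_marg \<delta> V r) = PX x * out_marg \<delta> ?V' y"
      by (simp add: out' sum_distrib_left)
    have e3: "PX x * pmf (V x) r * ln (PX x * pmf (V x) r / (PX x * out_marg \<delta> V r)) = PX x * pmf (V x) r * ln (pmf (V x) r / out_marg \<delta> V r)" for r
      using px by simp
    show ?thesis using ls unfolding e1 e2 e3 using px by simp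
  qed
  have "MI \<delta> ?V' = (\<Sum>x\<in>UNIV. \<Sum>y\<in>UNIV. PX x * pmf (?V' x) y * ln (pmf (?V' x) y / out_marg \<delta> ?V' y))"
    unfolding MI_def ..
  also have "\<dots> \<le> (\<Sum>x\<in>UNIV. \<Sum>y\<in>UNIV. \<Sum>r\<in>{r. f r = y}. PX x * pmf (V x) r * ln (pmf (V x) r / out_marg \<delta> V r))"
    by (intro sum_mono step)
  also have "\<dots> = MI \<delta> V"
    unfolding MI_def by (intro sum.cong refl sum_group_UNIV)
  finally show ?thesis .
qed

lemma MI_nonneg: "0 \<le> MI \<delta> V"
proof -
  have "MI \<delta> (\<lambda>x. map_pmf (\<lambda>_. (False, None)) (V x)) = 0"
  proof -
    have "\<And>x. map_pmf (\<lambda>_. (False, None)) (V x) = return_pmf (False, None)" by (simp add: map_pmf_const)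
    moreover have "out_marg \<delta> (\<lambda>x. return_pmf (False, None)) y = pmf (return_pmf (False, None)) y" for y
      unfolding out_marg_def by (simp add: sum_distrib_right[symmetric] PX_sum)
    ultimately show ?thesis unfolding MI_def by (auto simp: indicator_def of_bool_def intro!: sum.neutral)
  qed
  then show ?thesis using MI_map[of "\<lambda>_. (False, None)" V] by simp
qed

lemma Eds_map: fixes V :: chan and f :: "bool \<times> sym \<Rightarrow> bool \<times> sym" shows "Eds \<delta> (\<lambda>x. map_pmf f (V x)) = (\<Sum>x\<in>UNIV. PX x * (\<Sum>r\<in>UNIV. pmf (V x) r * dbar_s x (fst (f r))))"
proof -
  have "(\<Sum>zy\<in>UNIV. pmf (map_pmf f (V x)) zy * dbar_s x (fst zy)) = (\<Sum>r\<in>UNIV. pmf (V x) r * dbar_s x (fst (f r)))" for x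
    using sum_map_pmf_finite[where f=f and p="V x" and g="\<lambda>zy. dbar_s x (fst zy)"] by simp
  then show ?thesis unfolding Eds_def by simp
qed

lemma Edx_map: fixes V :: chan and f :: "bool \<times> sym \<Rightarrow> bool \<times> sym" shows "Edx \<delta> (\<lambda>x. map_pmf f (V x)) = (\<Sum>x\<in>UNIV. PX x * (\<Sum>r\<in>UNIV. pmf (V x) r * d_x x (snd (f r))))"
proof -
  have "(\<Sum>zy\<in>UNIV. pmf (map_pmf f (V x)) zy * d_x x (snd zy)) = (\<Sum>r\<in>UNIV. pmf (V x) r * d_x x (snd (f r)))" for x
    using sum_map_pmf_finite[where f=f and p="V x" and g="\<lambda>zy. d_x x (snd zy)"] by simp
  then show ?thesis unfolding Edx_def by simp
qed

end


lemma UNIV_sym: "(UNIV :: sym set) = {None, Some False, Some True}"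
  by (simp add: UNIV_option_conv UNIV_bool)

lemma sum_sym: "(\<Sum>x\<in>(UNIV::sym set). g x) = g None + g (Some False) + g (Some True)"
  by (simp add: UNIV_sym add.assoc)

lemma UNIV_out: "(UNIV :: (bool \<times> sym) set) = {(False, None), (False, Some False), (False, Some True), (True, None), (True, Some False), (True, Some True)}"
  using UNIV_sym by auto

lemma sum_out: "(\<Sum>r\<in>(UNIV::(bool \<times> sym) set). g r) = g (False, None) + g (False, Some False) + g (False, Some True) + g (True, None) + g (True, Some False) + g (True, Some True)"
  by (simp add: UNIV_out add.assoc)

definition mixc :: "real \<Rightarrow> chan \<Rightarrow> chan \<Rightarrow> chan" where
  "mixc t V1 V2 = (\<lambda>x. embed_pmf (\<lambda>r. t * pmf (V1 x) r + (1 - t) * pmf (V2 x) r))"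

lemma pmf_mixc:
  assumes "0 \<le> t" "t \<le> 1"
  shows "pmf (mixc t V1 V2 x) r = t * pmf (V1 x) r + (1 - t) * pmf (V2 x) r"
  unfolding mixc_def
  by (rule pmf_embed_finite) (use assms in \<open>auto simp: sum.distrib sum_distrib_left[symmetric] sum_pmf_finite\<close>)

context
  fixes \<delta> :: real
  assumes d0: "0 \<le> \<delta>" and d1: "\<delta> \<le> 1"
begin

lemma PX_None: "PX \<delta> None = \<delta>" using pmf_efcfX[OF d0 d1] by simp
lemma PX_Some: "PX \<delta> (Some b) = (1 - \<delta>) / 2" using pmf_efcfX[OF d0 d1] by simp

lemma Min_dx: "Min (range (d_x x)) = 0"
proof (rule Min_eqI)
  show "finite (range (d_x x))" by simp
  show "\<And>y. y \<in> range (d_x x) \<Longrightarrow> 0 \<le> y" by (auto simp: d_x_def)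
  show "0 \<in> range (d_x x)" by (auto simp: d_x_def image_iff intro: exI[of _ x])
qed

lemma Dadm_iff: "(a, b) \<in> Dadm \<delta> \<longleftrightarrow> \<delta> / 2 \<le> a \<and> 0 \<le> b"
proof -
  have "(\<Sum>x\<in>UNIV. PX \<delta> x * min (dbar_s x False) (dbar_s x True)) = \<delta> / 2"
    by (simp add: sum_sym PX_None PX_Some dbar_s_def)
  moreover have "(\<Sum>x\<in>UNIV. PX \<delta> x * Min (range (d_x x))) = 0" by (simp add: Min_dx)
  ultimately show ?thesis unfolding Dadm_def by auto
qed

lemma convex_Dadm: "convex (Dadm \<delta>)"
proof -
  have "Dadm \<delta> = {\<delta>/2..} \<times> {0..}" by (auto simp: Dadm_iff)
  then show ?thesis by (simp add: convex_Times)
qed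

lemma Eds_ge: "\<delta> / 2 \<le> Eds \<delta> V"
proof -
  have "\<delta> / 2 = (\<Sum>x\<in>UNIV. PX \<delta> x * (\<Sum>r\<in>UNIV. pmf (V x) r * (if x = None then 1/2 else 0)))"
    by (simp add: sum_sym PX_None PX_Some sum_distrib_right[symmetric] sum_pmf_finite)
  also have "\<dots> \<le> Eds \<delta> V" unfolding Eds_def
    by (intro sum_mono mult_left_mono) (auto simp: dbar_s_def split: option.splits)
  finally show ?thesis .
qed

lemma Edx_ge: "0 \<le> Edx \<delta> V"
  unfolding Edx_def by (intro sum_nonneg mult_nonneg_nonneg) (auto simp: d_x_def)

lemma E_Dadm: "(Eds \<delta> V, Edx \<delta> V) \<in> Dadm \<delta>"
  using Eds_ge Edx_ge Dadm_iff by simp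

definition V0 :: chan where "V0 = (\<lambda>x. return_pmf (case x of None \<Rightarrow> False | Some b \<Rightarrow> b, x))"

lemma V0_feasible: assumes "(a, b) \<in> Dadm \<delta>" shows "feasible \<delta> a b V0"
proof -
  have "Eds \<delta> V0 = \<delta> / 2"
    unfolding Eds_def V0_def by (simp add: sum_sym sum_out PX_None PX_Some dbar_s_def)
  moreover have "Edx \<delta> V0 = 0"
    unfolding Edx_def V0_def by (simp add: sum_sym sum_out d_x_def)
  ultimately show ?thesis using assms by (simp add: feasible_def Dadm_iff)
qed

lemma MI_bdd: "bdd_below {MI \<delta> W | W. feasible \<delta> a b W}"
proof (rule bdd_belowI[of _ 0])
  fix y assume "y \<in> {MI \<delta> W | W. feasible \<delta> a b W}"
  then obtain W where "y = MI \<delta> W" by blast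
  then show "0 \<le> y" using MI_nonneg[OF d0 d1, of W] by simp
qed

lemma R_le: "feasible \<delta> a b V \<Longrightarrow> Rfun \<delta> a b \<le> MI \<delta> V"
  unfolding Rfun_def by (rule cInf_lower) (auto intro: MI_bdd)

lemma R_nonneg: "(a, b) \<in> Dadm \<delta> \<Longrightarrow> 0 \<le> Rfun \<delta> a b"
  unfolding Rfun_def
proof (rule cInf_greatest)
  assume "(a, b) \<in> Dadm \<delta>"
  then show "{MI \<delta> W | W. feasible \<delta> a b W} \<noteq> {}" using V0_feasible by blast
  fix y assume "y \<in> {MI \<delta> W | W. feasible \<delta> a b W}"
  then obtain W where "y = MI \<delta> W" by blast
  then show "0 \<le> y" using MI_nonneg[OF d0 d1, of W] by simp
qed

lemma R_approx:
  assumes "(a, b) \<in> Dadm \<delta>" "e > 0"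
  obtains V where "feasible \<delta> a b V" "MI \<delta> V < Rfun \<delta> a b + e"
proof -
  have ne: "{MI \<delta> W | W. feasible \<delta> a b W} \<noteq> {}" using V0_feasible[OF assms(1)] by auto
  have "\<exists>y\<in>{MI \<delta> W | W. feasible \<delta> a b W}. y < Rfun \<delta> a b + e"
    using cInf_less_iff[OF ne MI_bdd, of "Rfun \<delta> a b + e"] assms(2) unfolding Rfun_def by simp
  then show ?thesis using that by auto
qed

lemma R_mono:
  assumes "(a, b) \<in> Dadm \<delta>" "a \<le> a'" "b \<le> b'"
  shows "Rfun \<delta> a' b' \<le> Rfun \<delta> a b"
proof -
  have "(a', b') \<in> Dadm \<delta>" using assms by (auto simp: Dadm_iff)
  show ?thesis unfolding Rfun_def[of \<delta> a b]
  proof (rule cInf_greatest)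
    show "{MI \<delta> W | W. feasible \<delta> a b W} \<noteq> {}" using V0_feasible[OF assms(1)] by auto
    fix y assume "y \<in> {MI \<delta> W | W. feasible \<delta> a b W}"
    then obtain W where "feasible \<delta> a b W" "y = MI \<delta> W" by auto
    then have "feasible \<delta> a' b' W" using assms by (auto simp: feasible_def)
    then show "Rfun \<delta> a' b' \<le> y" using R_le \<open>y = MI \<delta> W\<close> by simp
  qed
qed

lemma out_mixc:
  assumes "0 \<le> t" "t \<le> 1"
  shows "out_marg \<delta> (mixc t V1 V2) r = t * out_marg \<delta> V1 r + (1 - t) * out_marg \<delta> V2 r"
  unfolding out_marg_def pmf_mixc[OF assms]
  by (simp add: sum.distrib sum_distrib_left distrib_left mult.left_commute)

lemma Eds_mixc:
  assumes "0 \<le> t" "t \<le> 1"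
  shows "Eds \<delta> (mixc t V1 V2) = t * Eds \<delta> V1 + (1 - t) * Eds \<delta> V2"
  unfolding Eds_def pmf_mixc[OF assms]
  by (simp add: sum.distrib sum_distrib_left distrib_left distrib_right mult.assoc mult.left_commute)

lemma Edx_mixc:
  assumes "0 \<le> t" "t \<le> 1"
  shows "Edx \<delta> (mixc t V1 V2) = t * Edx \<delta> V1 + (1 - t) * Edx \<delta> V2"
  unfolding Edx_def pmf_mixc[OF assms]
  by (simp add: sum.distrib sum_distrib_left distrib_left distrib_right mult.assoc mult.left_commute)

lemma MI_mixc:
  assumes t0: "0 \<le> t" and t1: "t \<le> 1"
  shows "MI \<delta> (mixc t V1 V2) \<le> t * MI \<delta> V1 + (1 - t) * MI \<delta> V2"
proof -
  let ?V = "mixc t V1 V2"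
  have step: "PX \<delta> x * pmf (?V x) r * ln (pmf (?V x) r / out_marg \<delta> ?V r)
     \<le> t * (PX \<delta> x * pmf (V1 x) r * ln (pmf (V1 x) r / out_marg \<delta> V1 r))
       + (1 - t) * (PX \<delta> x * pmf (V2 x) r * ln (pmf (V2 x) r / out_marg \<delta> V2 r))" for x r
  proof (cases "PX \<delta> x = 0")
    case True then show ?thesis by simp
  next
    case False
    then have px: "PX \<delta> x > 0" using pmf_nonneg[of "efcfX \<delta>" x] by linarith
    define u where "u = (\<lambda>b. if b then t * pmf (V1 x) r else (1 - t) * pmf (V2 x) r)"
    define w where "w = (\<lambda>b. if b then t * out_marg \<delta> V1 r else (1 - t) * out_marg \<delta> V2 r)"
    have ls: "(\<Sum>b\<in>UNIV. u b) * ln ((\<Sum>b\<in>UNIV. u b) / (\<Sum>b\<in>UNIV. w b)) \<le> (\<Sum>b\<in>UNIV. u b * ln (u b / w b))"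
      by (rule log_sum_ineq)
         (use t0 t1 px out_nonneg[OF d0 d1] out_pos[OF d0 d1, of x V1 r] out_pos[OF d0 d1, of x V2 r] in \<open>auto simp: u_def w_def zero_less_mult_iff\<close>)
    have su: "(\<Sum>b\<in>UNIV. u b) = pmf (?V x) r" by (simp add: u_def pmf_mixc[OF t0 t1] UNIV_bool)
    have sw: "(\<Sum>b\<in>UNIV. w b) = out_marg \<delta> ?V r" by (simp add: w_def out_mixc[OF t0 t1] UNIV_bool)
    have e1: "u True * ln (u True / w True) = t * (pmf (V1 x) r * ln (pmf (V1 x) r / out_marg \<delta> V1 r))"
      by (cases "t = 0") (auto simp: u_def w_def)
    have e2: "u False * ln (u False / w False) = (1 - t) * (pmf (V2 x) r * ln (pmf (V2 x) r / out_marg \<delta> V2 r))"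
      by (cases "t = 1") (auto simp: u_def w_def)
    have "pmf (?V x) r * ln (pmf (?V x) r / out_marg \<delta> ?V r) \<le>
       t * (pmf (V1 x) r * ln (pmf (V1 x) r / out_marg \<delta> V1 r)) + (1 - t) * (pmf (V2 x) r * ln (pmf (V2 x) r / out_marg \<delta> V2 r))"
      using ls unfolding su sw by (simp add: UNIV_bool e1 e2 add.commute)
    then have "PX \<delta> x * (pmf (?V x) r * ln (pmf (?V x) r / out_marg \<delta> ?V r)) \<le>
       PX \<delta> x * (t * (pmf (V1 x) r * ln (pmf (V1 x) r / out_marg \<delta> V1 r)) + (1 - t) * (pmf (V2 x) r * ln (pmf (V2 x) r / out_marg \<delta> V2 r)))"
      using px by (intro mult_left_mono) auto
    then show ?thesis by (simp add: algebra_simps)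
  qed
  have "MI \<delta> ?V \<le> (\<Sum>x\<in>UNIV. \<Sum>r\<in>UNIV. t * (PX \<delta> x * pmf (V1 x) r * ln (pmf (V1 x) r / out_marg \<delta> V1 r))
       + (1 - t) * (PX \<delta> x * pmf (V2 x) r * ln (pmf (V2 x) r / out_marg \<delta> V2 r)))"
    unfolding MI_def by (intro sum_mono step)
  also have "\<dots> = t * MI \<delta> V1 + (1 - t) * MI \<delta> V2"
    unfolding MI_def by (simp add: sum.distrib sum_distrib_left)
  finally show ?thesis .
qed

definition Rf :: "real \<times> real \<Rightarrow> real" where "Rf q = Rfun \<delta> (fst q) (snd q)"

lemma R_convex: "convex_on (Dadm \<delta>) Rf"
proof (rule convex_onI)
  show "convex (Dadm \<delta>)" by (rule convex_Dadm)
  fix t :: real and q1 q2 assume t: "0 < t" "t < 1" and q1: "q1 \<in> Dadm \<delta>" and q2: "q2 \<in> Dadm \<delta>"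
  obtain a1 b1 a2 b2 where qq: "q1 = (a1, b1)" "q2 = (a2, b2)" by fastforce
  let ?a = "(1 - t) * a1 + t * a2" and ?b = "(1 - t) * b1 + t * b2"
  have "Rfun \<delta> ?a ?b \<le> (1 - t) * Rfun \<delta> a1 b1 + t * Rfun \<delta> a2 b2 + e" if e: "e > 0" for e
  proof -
    obtain V1 where V1: "feasible \<delta> a1 b1 V1" "MI \<delta> V1 < Rfun \<delta> a1 b1 + e" using R_approx q1 qq e by metis
    obtain V2 where V2: "feasible \<delta> a2 b2 V2" "MI \<delta> V2 < Rfun \<delta> a2 b2 + e" using R_approx q2 qq e by metis
    let ?V = "mixc (1 - t) V1 V2"
    have "feasible \<delta> ?a ?b ?V"
      using V1(1) V2(1) t unfolding feasible_def
      by (simp add: Eds_mixc Edx_mixc add_mono mult_left_mono)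
    then have "Rfun \<delta> ?a ?b \<le> MI \<delta> ?V" by (rule R_le)
    also have "\<dots> \<le> (1 - t) * MI \<delta> V1 + t * MI \<delta> V2" using MI_mixc[of "1 - t" V1 V2] t by simp
    also have "\<dots> \<le> (1 - t) * (Rfun \<delta> a1 b1 + e) + t * (Rfun \<delta> a2 b2 + e)"
      using V1(2) V2(2) t by (intro add_mono mult_left_mono) auto
    finally show ?thesis by (simp add: algebra_simps)
  qed
  then have "Rfun \<delta> ?a ?b \<le> (1 - t) * Rfun \<delta> a1 b1 + t * Rfun \<delta> a2 b2"
    by (meson field_le_epsilon)
  then show "Rf ((1 - t) *\<^sub>R q1 + t *\<^sub>R q2) \<le> (1 - t) * Rf q1 + t * Rf q2"
    by (simp add: Rf_def qq)
qed

end



locale cvx1 =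
  fixes g :: "real \<Rightarrow> real" and lo x0 :: real
  assumes cvx: "convex_on {lo..} g" and x0: "lo < x0"
begin

definition rq :: "real \<Rightarrow> real" where "rq h = (g (x0 + h) - g x0) / h"
definition lq :: "real \<Rightarrow> real" where "lq h = (g x0 - g (x0 - h)) / h"

lemma rq_mono: "0 < h \<Longrightarrow> h < h' \<Longrightarrow> rq h \<le> rq h'"
proof -
  assume a: "0 < h" "h < h'"
  have "(g x0 - g (x0 + h')) / h' \<le> (g x0 - g (x0 + h)) / h"
    using convex_on_slope_le(1)[OF cvx, of x0 "x0 + h'" "x0 + h"] x0 a by simp
  then show ?thesis using a by (simp add: rq_def field_simps)
qed

lemma lq_mono: "0 < h \<Longrightarrow> h < h' \<Longrightarrow> h' \<le> x0 - lo \<Longrightarrow> lq h' \<le> lq h"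
proof -
  assume a: "0 < h" "h < h'" "h' \<le> x0 - lo"
  have "(g (x0 - h) - g x0) / h \<le> (g (x0 - h') - g x0) / h'"
    using convex_on_slope_le(2)[OF cvx, of "x0 - h'" x0 "x0 - h"] x0 a by simp
  then show ?thesis using a by (simp add: lq_def field_simps)
qed

lemma lq_rq: "0 < h' \<Longrightarrow> h' \<le> x0 - lo \<Longrightarrow> 0 < h \<Longrightarrow> lq h' \<le> rq h"
proof -
  assume a: "0 < h'" "h' \<le> x0 - lo" "0 < h"
  have "(g (x0 - h') - g x0) / (x0 - h' - x0) \<le> (g (x0 - h') - g (x0 + h)) / (x0 - h' - (x0 + h))"
    using convex_on_slope_le(1)[OF cvx, of "x0 - h'" "x0 + h" x0] a by simp
  also have "\<dots> \<le> (g x0 - g (x0 + h)) / (x0 - (x0 + h))"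
    using convex_on_slope_le(2)[OF cvx, of "x0 - h'" "x0 + h" x0] a by simp
  finally show ?thesis unfolding lq_def rq_def
    by (smt (verit, ccfv_SIG) minus_divide_divide)
qed

definition Ap where "Ap = Inf (rq ` {0<..})"
definition Am where "Am = Sup (lq ` {0<..x0 - lo})"

lemma bdd_rq: "bdd_below (rq ` {0<..})"
  using lq_rq[of "x0 - lo"] x0 by (intro bdd_belowI[of _ "lq (x0 - lo)"]) auto

lemma bdd_lq: "bdd_above (lq ` {0<..x0 - lo})"
  using lq_rq[of _ 1] by (intro bdd_aboveI[of _ "rq 1"]) auto

lemma Ap_le: "0 < h \<Longrightarrow> Ap \<le> rq h"
  unfolding Ap_def using bdd_rq by (intro cInf_lower) auto

lemma Am_ge: "0 < h \<Longrightarrow> h \<le> x0 - lo \<Longrightarrow> lq h \<le> Am"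
  unfolding Am_def using bdd_lq by (intro cSup_upper) auto

lemma Am_le_Ap: "Am \<le> Ap"
  unfolding Am_def Ap_def
proof (rule cSup_least)
  show "lq ` {0<..x0 - lo} \<noteq> {}" using x0 by auto
  fix y assume "y \<in> lq ` {0<..x0 - lo}"
  then obtain h' where h': "0 < h'" "h' \<le> x0 - lo" "y = lq h'" by auto
  show "y \<le> Inf (rq ` {0<..})"
    by (rule cInf_greatest) (use h' lq_rq in auto)
qed

lemma tang:
  assumes "Am \<le> a" "a \<le> Ap" "lo \<le> x0 + t"
  shows "g x0 + a * t \<le> g (x0 + t)"
proof (cases t "0::real" rule: linorder_cases)
  case less
  have "lq (- t) \<le> Am" using Am_ge[of "-t"] less assms(3) by simp
  then have "lq (- t) \<le> a" using assms by simp
  then have "(g x0 - g (x0 + t)) / t \<ge> - a" using less by (simp add: lq_def)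
  then have "(g x0 - g (x0 + t)) / t * t \<le> - a * t" using less by (intro mult_right_mono_neg) auto
  then show ?thesis using less by simp
next
  case greater
  have "a \<le> rq t" using Ap_le[OF greater] assms by simp
  then have "a * t \<le> g (x0 + t) - g x0" using greater by (simp add: rq_def le_divide_eq)
  then show ?thesis by simp
qed simp

lemma deriv_eq:
  assumes "Am = Ap"
  shows "DERIV g x0 :> Ap"
proof -
  have "((\<lambda>t. (g (x0 + t) - g x0) / t) \<midarrow>0\<rightarrow> Ap)"
    unfolding LIM_eq
  proof (intro allI impI)
    fix e :: real assume e: "0 < e"
    have "\<exists>y\<in>rq ` {0<..}. y < Ap + e"
      using cInf_less_iff[of "rq ` {0<..}" "Ap + e"] bdd_rq e unfolding Ap_def by auto
    then obtain h1 where h1: "0 < h1" "rq h1 < Ap + e" by auto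
    have "\<exists>y\<in>lq ` {0<..x0 - lo}. Am - e < y"
      using less_cSup_iff[of "lq ` {0<..x0 - lo}" "Am - e"] bdd_lq e x0 unfolding Am_def by auto
    then obtain h2 where h2: "0 < h2" "h2 \<le> x0 - lo" "Am - e < lq h2" by auto
    show "\<exists>s>0. \<forall>t. t \<noteq> 0 \<and> norm (t - 0) < s \<longrightarrow> norm ((g (x0 + t) - g x0) / t - Ap) < e"
    proof (intro exI[of _ "min h1 h2"] conjI allI impI)
      show "0 < min h1 h2" using h1 h2 by simp
      fix t :: real assume t: "t \<noteq> 0 \<and> norm (t - 0) < min h1 h2"
      show "norm ((g (x0 + t) - g x0) / t - Ap) < e"
      proof (cases "t > 0")
        case True
        have "rq t \<le> rq h1" using rq_mono[of t h1] True t by (cases "t = h1") auto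
        moreover have "Ap \<le> rq t" using Ap_le True by simp
        ultimately show ?thesis using h1 by (simp add: rq_def)
      next
        case False
        then have tn: "0 < - t" using t by simp
        have "lq h2 \<le> lq (- t)" using lq_mono[of "- t" h2] tn t h2 by (cases "- t = h2") auto
        moreover have "lq (- t) \<le> Am" using Am_ge[of "- t"] tn t h2 by simp
        moreover have "lq (- t) = (g (x0 + t) - g x0) / t" unfolding lq_def
          by (smt (verit, ccfv_SIG) minus_divide_divide)
        ultimately show ?thesis using h2 assms by simp
      qed
    qed
  qed
  then show ?thesis by (simp add: DERIV_def)
qed

end


lemma subgrad_dir:
  fixes f :: "'a::euclidean_space \<Rightarrow> real" and U :: "'a set"
  assumes cU: "convex U" and cf: "convex_on U f" and p: "p \<in> interior U"
    and tang: "\<And>t. p + t *\<^sub>R d \<in> U \<Longrightarrow> f p + a * t \<le> f (p + t *\<^sub>R d)"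
  shows "\<exists>v. inner v d = a \<and> (\<forall>q\<in>U. f p + inner v (q - p) \<le> f q)"
proof -
  define S where "S = {(q, r). q \<in> U \<and> f q < r}"
  define T where "T = (\<lambda>t. (p + t *\<^sub>R d, f p + a * t)) ` UNIV"
  have pU: "p \<in> U" using p interior_subset by blast
  have cS: "convex S"
    unfolding convex_def
  proof (intro ballI allI impI)
    fix x y :: "'a \<times> real" and u v :: real
    assume x: "x \<in> S" and y: "y \<in> S" and u0: "0 \<le> u" and v0: "0 \<le> v" and uv1: "u + v = 1"
    have uv: "0 \<le> u \<and> 0 \<le> v \<and> u + v = 1" using u0 v0 uv1 by simp
    obtain q1 r1 q2 r2 where xy: "x = (q1, r1)" "y = (q2, r2)" by fastforce
    have q: "q1 \<in> U" "q2 \<in> U" "f q1 < r1" "f q2 < r2" using x y xy by (auto simp: S_def)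
    have "u *\<^sub>R q1 + v *\<^sub>R q2 \<in> U" using cU q uv unfolding convex_def by blast
    moreover have "f (u *\<^sub>R q1 + v *\<^sub>R q2) \<le> u * f q1 + v * f q2"
      using cf q uv unfolding convex_on_def by blast
    moreover have "u * f q1 + v * f q2 < u * r1 + v * r2"
    proof (cases "u = 0")
      case True then show ?thesis using uv q by simp
    next
      case False then have "u > 0" using uv by simp
      then have "u * f q1 < u * r1" using q by simp
      moreover have "v * f q2 \<le> v * r2" using q uv by (intro mult_left_mono) auto
      ultimately show ?thesis by simp
    qed
    ultimately show "u *\<^sub>R x + v *\<^sub>R y \<in> S" by (simp add: S_def xy)
  qed
  have cT: "convex T"
    unfolding convex_def T_def
  proof (intro ballI allI impI)
    fix x y :: "'a \<times> real" and u v :: real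
    assume x: "x \<in> range (\<lambda>t. (p + t *\<^sub>R d, f p + a * t))" and y: "y \<in> range (\<lambda>t. (p + t *\<^sub>R d, f p + a * t))"
      and u0: "0 \<le> u" and v0: "0 \<le> v" and uv1: "u + v = 1"
    have uv: "0 \<le> u \<and> 0 \<le> v \<and> u + v = 1" using u0 v0 uv1 by simp
    obtain t1 t2 where xy: "x = (p + t1 *\<^sub>R d, f p + a * t1)" "y = (p + t2 *\<^sub>R d, f p + a * t2)" using x y by auto
    have "u *\<^sub>R x + v *\<^sub>R y = (p + (u * t1 + v * t2) *\<^sub>R d, f p + a * (u * t1 + v * t2))"
    proof -
      have "u *\<^sub>R p + v *\<^sub>R p = p" using uv by (metis scaleR_add_left scaleR_one)
      moreover have "u * f p + v * f p = f p" using uv by (metis distrib_right mult_1)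
      ultimately show ?thesis unfolding xy by (simp add: algebra_simps scaleR_add_right)
    qed
    then show "u *\<^sub>R x + v *\<^sub>R y \<in> range (\<lambda>t. (p + t *\<^sub>R d, f p + a * t))" by auto
  qed
  have disj: "S \<inter> T = {}"
  proof (rule ccontr)
    assume "S \<inter> T \<noteq> {}"
    then obtain t where "p + t *\<^sub>R d \<in> U" "f (p + t *\<^sub>R d) < f p + a * t" by (auto simp: S_def T_def)
    then show False using tang by force
  qed
  have "(p, f p + 1) \<in> S" using pU by (simp add: S_def)
  then have neS: "S \<noteq> {}" by blast
  have neT: "T \<noteq> {}" by (simp add: T_def)
  obtain c b where c0: "c \<noteq> 0" and cS': "\<forall>x\<in>S. inner c x \<le> b" and cT': "\<forall>x\<in>T. b \<le> inner c x"
    using separating_hyperplane_sets[OF cS cT neS neT disj] by blast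
  obtain cq c3 where cc: "c = (cq, c3)" by fastforce
  have Tt: "b \<le> inner cq p + c3 * f p + t * (inner cq d + c3 * a)" for t
    using cT' by (auto simp: T_def cc inner_add_right algebra_simps)
  have m0: "inner cq d + c3 * a = 0"
  proof (rule ccontr)
    assume m: "inner cq d + c3 * a \<noteq> 0"
    define m where "m = inner cq d + c3 * a"
    have "b \<le> inner cq p + c3 * f p + ((b - inner cq p - c3 * f p - 1) / m) * m"
      using Tt[of "(b - inner cq p - c3 * f p - 1) / m"] by (simp add: m_def)
    then show False using m by (simp add: m_def)
  qed
  have K: "b \<le> inner cq p + c3 * f p" using Tt[of 0] by simp
  have Sq: "inner cq q + c3 * r \<le> b" if "q \<in> U" "f q < r" for q r
    using cS' that by (auto simp: S_def cc)
  have c3le: "c3 \<le> 0"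
  proof (rule ccontr)
    assume "\<not> c3 \<le> 0"
    then have c3p: "c3 > 0" by simp
    define r where "r = f p + 1 + \<bar>b - inner cq p\<bar> / c3"
    have "f p < r" using c3p by (simp add: r_def add_pos_nonneg)
    then have "inner cq p + c3 * r \<le> b" using Sq[OF pU, of r] by simp
    moreover have "c3 * r = c3 * (f p + 1) + \<bar>b - inner cq p\<bar>" using c3p by (simp add: r_def algebra_simps)
    moreover have "c3 * (f p + 1) > c3 * f p" using c3p by simp
    ultimately show False using K by linarith
  qed
  have c3n: "c3 \<noteq> 0"
  proof
    assume c3: "c3 = 0"
    then have cq0: "cq \<noteq> 0" using c0 cc by (auto simp: zero_prod_def)
    obtain e where e: "e > 0" "ball p e \<subseteq> U" using p mem_interior by blast
    define q where "q = p + (e / (2 * norm cq)) *\<^sub>R cq"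
    have "dist p q < e" using e cq0 by (simp add: q_def dist_norm)
    then have qU: "q \<in> U" using e by auto
    have "inner cq q = inner cq p + (e / (2 * norm cq)) * (norm cq)^2"
      by (simp add: q_def inner_add_right power2_norm_eq_inner)
    moreover have "(e / (2 * norm cq)) * (norm cq)^2 > 0" using e cq0 by simp
    moreover have "inner cq q \<le> b" using Sq[OF qU, of "f q + 1"] c3 by simp
    moreover have "b \<le> inner cq p" using K c3 by simp
    ultimately show False by linarith
  qed
  then have c3neg: "c3 < 0" using c3le by simp
  define v where "v = (1 / (- c3)) *\<^sub>R cq"
  have vd: "inner v d = a" using m0 c3neg by (simp add: v_def field_simps)
  have "f p + inner v (q - p) \<le> f q" if qU: "q \<in> U" for q
  proof (rule ccontr)
    assume "\<not> f p + inner v (q - p) \<le> f q"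
    then have lt: "f q < f p + inner v (q - p)" by simp
    define r where "r = (f q + (f p + inner v (q - p))) / 2"
    have r1: "f q < r" and r2: "r < f p + inner v (q - p)" using lt by (auto simp: r_def)
    have "inner cq q + c3 * r \<le> inner cq p + c3 * f p" using Sq[OF qU r1] K by simp
    then have "c3 * (r - f p) \<le> - inner cq (q - p)" by (simp add: inner_diff_right algebra_simps)
    then have "r - f p \<ge> inner cq (q - p) / (- c3)" using c3neg by (simp add: field_simps)
    moreover have "inner v (q - p) = inner cq (q - p) / (- c3)" by (simp add: v_def)
    ultimately show False using r2 by simp
  qed
  then show ?thesis using vd by blast
qed


lemma KL_nonneg:
  fixes p q :: "'a::finite \<Rightarrow> real"
  assumes "\<And>i. 0 \<le> p i" "\<And>i. 0 \<le> q i" "\<And>i. p i > 0 \<Longrightarrow> q i > 0"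
    "(\<Sum>i\<in>UNIV. p i) = 1" "(\<Sum>i\<in>UNIV. q i) = 1"
  shows "0 \<le> (\<Sum>i\<in>UNIV. p i * ln (p i / q i))"
  using log_sum_ineq[of UNIV p q] assms by simp

context
  fixes \<delta> ls lx :: real
  assumes d0: "0 \<le> \<delta>" and d1: "\<delta> \<le> 1"
begin

definition dst :: "sym \<Rightarrow> bool \<times> sym \<Rightarrow> real" where
  "dst x r = ls * dbar_s x (fst r) + lx * d_x x (snd r)"

definition FF :: "chan \<Rightarrow> real" where
  "FF V = MI \<delta> V + ls * Eds \<delta> V + lx * Edx \<delta> V"

definition ZZ :: "(bool \<times> sym \<Rightarrow> real) \<Rightarrow> sym \<Rightarrow> real" where
  "ZZ Q x = (\<Sum>r\<in>UNIV. Q r * exp (- dst x r))"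

definition VQ :: "(bool \<times> sym \<Rightarrow> real) \<Rightarrow> chan" where
  "VQ Q x = embed_pmf (\<lambda>r. Q r * exp (- dst x r) / ZZ Q x)"

definition GG :: "(bool \<times> sym \<Rightarrow> real) \<Rightarrow> real" where
  "GG Q = (\<Sum>x\<in>UNIV. PX \<delta> x * (- ln (ZZ Q x)))"

definition distr :: "(bool \<times> sym \<Rightarrow> real) \<Rightarrow> bool" where
  "distr Q \<longleftrightarrow> (\<forall>r. 0 \<le> Q r) \<and> (\<Sum>r\<in>UNIV. Q r) = 1"

lemma ZZ_pos: assumes "distr Q" shows "0 < ZZ Q x"
proof -
  obtain r where "Q r > 0"
    using assms unfolding distr_def by (metis less_eq_real_def sum.neutral zero_neq_one)
  then have "0 < Q r * exp (- dst x r)" by simp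
  also have "\<dots> \<le> ZZ Q x" unfolding ZZ_def
    by (rule member_le_sum) (use assms in \<open>auto simp: distr_def\<close>)
  finally show ?thesis .
qed

lemma pmf_VQ: assumes "distr Q" shows "pmf (VQ Q x) r = Q r * exp (- dst x r) / ZZ Q x"
  unfolding VQ_def
proof (rule pmf_embed_finite)
  show "\<And>r. 0 \<le> Q r * exp (- dst x r) / ZZ Q x" using assms ZZ_pos[OF assms, of x] by (auto simp: distr_def)
  show "(\<Sum>r\<in>UNIV. Q r * exp (- dst x r) / ZZ Q x) = 1"
    using ZZ_pos[OF assms, of x] by (simp add: sum_divide_distrib[symmetric] ZZ_def)
qed

lemma E_lin: "ls * Eds \<delta> V + lx * Edx \<delta> V = (\<Sum>x\<in>UNIV. PX \<delta> x * (\<Sum>r\<in>UNIV. pmf (V x) r * dst x r))"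
  unfolding Eds_def Edx_def dst_def
  by (simp add: sum_distrib_left sum.distrib[symmetric] distrib_left mult.left_commute)

lemma MI_le_D:
  assumes Q: "distr Q" and supp: "\<And>x r. PX \<delta> x > 0 \<Longrightarrow> pmf (V x) r > 0 \<Longrightarrow> Q r > 0"
  shows "MI \<delta> V \<le> (\<Sum>x\<in>UNIV. \<Sum>r\<in>UNIV. PX \<delta> x * pmf (V x) r * ln (pmf (V x) r / Q r))"
proof -
  let ?out = "out_marg \<delta> V"
  have e: "PX \<delta> x * pmf (V x) r * ln (pmf (V x) r / Q r) - PX \<delta> x * pmf (V x) r * ln (pmf (V x) r / ?out r)
        = PX \<delta> x * pmf (V x) r * ln (?out r / Q r)" for x r
  proof (cases "PX \<delta> x * pmf (V x) r = 0")
    case True then show ?thesis by (simp only: True mult_zero_left diff_self)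
  next
    case False
    then have px: "PX \<delta> x > 0" and v: "pmf (V x) r > 0"
      using pmf_nonneg[of "efcfX \<delta>" x] pmf_nonneg[of "V x" r] by (auto simp: less_le)
    have q: "Q r > 0" using supp[OF px v] .
    have o: "?out r > 0" using out_pos[OF d0 d1, of x V r] px v by blast
    show ?thesis using q o v by (simp add: ln_div algebra_simps)
  qed
  have supp_out: "?out r > 0 \<Longrightarrow> Q r > 0" for r
  proof -
    assume "?out r > 0"
    then obtain x where "PX \<delta> x * pmf (V x) r \<noteq> 0" unfolding out_marg_def
      by (metis (no_types, lifting) less_irrefl sum.neutral)
    then have "PX \<delta> x > 0" "pmf (V x) r > 0"
      using pmf_nonneg[of "efcfX \<delta>" x] pmf_nonneg[of "V x" r] by (auto simp: less_le)
    then show "Q r > 0" using supp by blast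
  qed
  have "(\<Sum>x\<in>UNIV. \<Sum>r\<in>UNIV. PX \<delta> x * pmf (V x) r * ln (pmf (V x) r / Q r)) - MI \<delta> V
      = (\<Sum>x\<in>UNIV. \<Sum>r\<in>UNIV. PX \<delta> x * pmf (V x) r * ln (?out r / Q r))"
    unfolding MI_def by (simp add: sum_subtractf[symmetric] e)
  also have "\<dots> = (\<Sum>r\<in>UNIV. ?out r * ln (?out r / Q r))"
    by (subst sum.swap) (simp add: out_marg_def sum_distrib_right)
  also have "\<dots> \<ge> 0"
    using KL_nonneg[of ?out Q] out_nonneg[OF d0 d1] out_sum[OF d0 d1] Q supp_out
    unfolding distr_def by blast
  finally show ?thesis by simp
qed

lemma FF_VQ_le: assumes Q: "distr Q" shows "FF (VQ Q) \<le> GG Q"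
proof -
  have supp: "pmf (VQ Q x) r > 0 \<Longrightarrow> Q r > 0" for x r
    using Q ZZ_pos[OF Q, of x] unfolding pmf_VQ[OF Q] distr_def
    by (metis divide_eq_0_iff less_eq_real_def mult_eq_0_iff)
  have "FF (VQ Q) \<le> (\<Sum>x\<in>UNIV. \<Sum>r\<in>UNIV. PX \<delta> x * pmf (VQ Q x) r * ln (pmf (VQ Q x) r / Q r))
        + (\<Sum>x\<in>UNIV. PX \<delta> x * (\<Sum>r\<in>UNIV. pmf (VQ Q x) r * dst x r))"
    unfolding FF_def using MI_le_D[OF Q, of "VQ Q"] supp E_lin[of "VQ Q"] by simp
  also have "\<dots> = (\<Sum>x\<in>UNIV. PX \<delta> x * (\<Sum>r\<in>UNIV. pmf (VQ Q x) r * (ln (pmf (VQ Q x) r / Q r) + dst x r)))"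
    by (simp add: sum.distrib[symmetric] sum_distrib_left distrib_left mult.assoc)
  also have "\<dots> = (\<Sum>x\<in>UNIV. PX \<delta> x * (\<Sum>r\<in>UNIV. pmf (VQ Q x) r * (- ln (ZZ Q x))))"
  proof -
    have inner: "pmf (VQ Q x) r * (ln (pmf (VQ Q x) r / Q r) + dst x r) = pmf (VQ Q x) r * (- ln (ZZ Q x))" for x r
    proof (cases "Q r = 0")
      case True then show ?thesis by (simp add: pmf_VQ[OF Q])
    next
      case False
      then have q: "Q r > 0" using Q unfolding distr_def by (metis less_eq_real_def)
      have "pmf (VQ Q x) r / Q r = exp (- dst x r) / ZZ Q x" using q by (simp add: pmf_VQ[OF Q])
      then have "ln (pmf (VQ Q x) r / Q r) = - dst x r - ln (ZZ Q x)"
        using ZZ_pos[OF Q, of x] by (simp add: ln_div)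
      then show ?thesis by simp
    qed
    show ?thesis by (simp only: inner)
  qed
  also have "\<dots> = GG Q"
    unfolding GG_def by (simp add: sum_negf sum_distrib_right[symmetric] sum_pmf_finite)
  finally show ?thesis .
qed

context
  fixes W :: chan
  assumes Wmin: "\<And>V. FF W \<le> FF V"
begin

definition QW where "QW = out_marg \<delta> W"

lemma QW_distr: "distr QW"
  unfolding distr_def QW_def using out_nonneg[OF d0 d1] out_sum[OF d0 d1] by blast

lemma W_facts:
  shows "(\<forall>x r. PX \<delta> x > 0 \<longrightarrow> pmf (W x) r = QW r * exp (- dst x r) / ZZ QW x) \<and> FF W = GG QW"
proof -
  let ?Q = QW
  have Q: "distr ?Q" by (rule QW_distr)
  have supp: "pmf (W x) r > 0 \<Longrightarrow> PX \<delta> x > 0 \<Longrightarrow> ?Q r > 0" for x r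
    unfolding QW_def using out_pos[OF d0 d1] by blast
  have term_eq: "PX \<delta> x * (pmf (W x) r * ln (pmf (W x) r / ?Q r) + pmf (W x) r * dst x r)
      = PX \<delta> x * (pmf (W x) r * ln (pmf (W x) r / pmf (VQ ?Q x) r) - pmf (W x) r * ln (ZZ ?Q x))" for x r
  proof (cases "PX \<delta> x * pmf (W x) r = 0")
    case True
    have "PX \<delta> x * (pmf (W x) r * a) = 0" for a using True by (simp only: mult.assoc[symmetric] True mult_zero_left)
    then show ?thesis by (simp only: distrib_left diff_conv_add_uminus mult_minus_right)
  next
    case False
    then have px: "PX \<delta> x > 0" and w: "pmf (W x) r > 0"
      using pmf_nonneg[of "efcfX \<delta>" x] pmf_nonneg[of "W x" r] by (auto simp: less_le)
    have q: "?Q r > 0" using supp[OF w px] .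
    have z: "ZZ ?Q x > 0" using ZZ_pos[OF Q] .
    have L1: "ln (pmf (W x) r / pmf (VQ ?Q x) r) = ln (pmf (W x) r) - ln (?Q r) + dst x r + ln (ZZ ?Q x)"
      using q z w by (simp add: pmf_VQ[OF Q] ln_div ln_mult)
    have L2: "ln (pmf (W x) r / ?Q r) = ln (pmf (W x) r) - ln (?Q r)" using q w by (simp add: ln_div)
    show ?thesis unfolding L1 L2 by (simp add: algebra_simps)
  qed
  define D where "D = (\<lambda>x. \<Sum>r\<in>UNIV. pmf (W x) r * ln (pmf (W x) r / pmf (VQ ?Q x) r))"
  have FW: "FF W = (\<Sum>x\<in>UNIV. PX \<delta> x * D x) + GG ?Q"
  proof -
    have "FF W = (\<Sum>x\<in>UNIV. \<Sum>r\<in>UNIV. PX \<delta> x * pmf (W x) r * ln (pmf (W x) r / ?Q r))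
        + (\<Sum>x\<in>UNIV. PX \<delta> x * (\<Sum>r\<in>UNIV. pmf (W x) r * dst x r))"
      unfolding FF_def MI_def QW_def using E_lin[of W] by (simp add: add.assoc)
    also have "\<dots> = (\<Sum>x\<in>UNIV. \<Sum>r\<in>UNIV. PX \<delta> x * (pmf (W x) r * ln (pmf (W x) r / ?Q r) + pmf (W x) r * dst x r))"
      by (simp add: sum.distrib[symmetric] sum_distrib_left distrib_left mult.assoc)
    also have "\<dots> = (\<Sum>x\<in>UNIV. \<Sum>r\<in>UNIV. PX \<delta> x * (pmf (W x) r * ln (pmf (W x) r / pmf (VQ ?Q x) r) - pmf (W x) r * ln (ZZ ?Q x)))"
      by (simp add: term_eq)
    also have "\<dots> = (\<Sum>x\<in>UNIV. PX \<delta> x * D x) + GG ?Q"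
      unfolding D_def GG_def
      by (simp add: sum_distrib_left[symmetric] sum_subtractf sum.distrib[symmetric] sum_distrib_right[symmetric]
          sum_pmf_finite algebra_simps)
    finally show ?thesis .
  qed
  have D0: "0 \<le> D x" if px: "PX \<delta> x > 0" for x
    unfolding D_def
  proof (rule KL_nonneg)
    show "\<And>i. 0 \<le> pmf (W x) i" "\<And>i. 0 \<le> pmf (VQ ?Q x) i" by auto
    show "(\<Sum>i\<in>UNIV. pmf (W x) i) = 1" "(\<Sum>i\<in>UNIV. pmf (VQ ?Q x) i) = 1" by (simp_all add: sum_pmf_finite)
    fix i assume w: "pmf (W x) i > 0"
    then have "?Q i > 0" using supp px by blast
    then show "pmf (VQ ?Q x) i > 0" using ZZ_pos[OF Q, of x] by (simp add: pmf_VQ[OF Q])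
  qed
  have PD0: "0 \<le> PX \<delta> x * D x" for x
    using D0[of x] pmf_nonneg[of "efcfX \<delta>" x] by (cases "PX \<delta> x > 0") (auto simp: less_le)
  have "FF W \<le> GG ?Q" using Wmin[of "VQ ?Q"] FF_VQ_le[OF Q] by simp
  then have "(\<Sum>x\<in>UNIV. PX \<delta> x * D x) \<le> 0" using FW by simp
  then have "(\<Sum>x\<in>UNIV. PX \<delta> x * D x) = 0" using sum_nonneg[of UNIV "\<lambda>x. PX \<delta> x * D x"] PD0 by simp
  then have PD: "PX \<delta> x * D x = 0" for x using sum_nonneg_eq_0_iff[of UNIV "\<lambda>x. PX \<delta> x * D x"] PD0 by simp
  have "FF W = GG ?Q" using FW PD by simp
  moreover have "pmf (W x) r = QW r * exp (- dst x r) / ZZ QW x" if px: "PX \<delta> x > 0" for x r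
  proof -
    have Dx: "D x \<le> 0" using px PD[of x] by simp
    have "pmf (W x) r = pmf (VQ ?Q x) r"
    proof (rule gibbs_eq[of UNIV "pmf (W x)" "pmf (VQ ?Q x)"])
      show "(\<Sum>i\<in>UNIV. pmf (W x) i * ln (pmf (W x) i / pmf (VQ ?Q x) i)) \<le> 0" using Dx by (simp add: D_def)
      fix i assume w: "pmf (W x) i > 0"
      then have "?Q i > 0" using supp px by blast
      then show "pmf (VQ ?Q x) i > 0" using ZZ_pos[OF Q, of x] by (simp add: pmf_VQ[OF Q])
    qed (auto simp: sum_pmf_finite)
    then show ?thesis by (simp add: pmf_VQ[OF Q])
  qed
  ultimately show ?thesis by blast
qed

lemma W_struct: "PX \<delta> x > 0 \<Longrightarrow> pmf (W x) r = QW r * exp (- dst x r) / ZZ QW x"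
  using W_facts by blast

lemma FF_W: "FF W = GG QW"
  using W_facts by blast

lemma KKT: "(\<Sum>x\<in>UNIV. PX \<delta> x * (exp (- dst x r0) / ZZ QW x)) \<le> 1"
proof -
  have Q: "distr QW" by (rule QW_distr)
  define A where "A = (\<lambda>x. exp (- dst x r0) / ZZ QW x)"
  define b where "b = (\<lambda>x. A x - 1)"
  have Zp: "ZZ QW x > 0" for x using ZZ_pos[OF Q] .
  have Ap: "A x > 0" for x using Zp[of x] by (simp add: A_def)
  have phi_le: "(\<Sum>x\<in>UNIV. PX \<delta> x * (b x / (1 + t * b x))) \<le> 0" if t: "0 < t" "t < 1" for t
  proof -
    define Qt where "Qt = (\<lambda>r. (1 - t) * QW r + t * (if r = r0 then 1 else 0))"
    have Qt: "distr Qt"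
      using Q t unfolding distr_def Qt_def
      by (auto simp: sum.distrib sum_distrib_left[symmetric] intro!: add_nonneg_nonneg mult_nonneg_nonneg)
    have pos: "1 + t * b x > 0" for x
    proof -
      have "1 + t * b x = (1 - t) + t * A x" by (simp add: b_def algebra_simps)
      moreover have "t * A x > 0" using t Ap[of x] by simp
      ultimately show ?thesis using t by simp
    qed
    have ZQt: "ZZ Qt x = ZZ QW x * (1 + t * b x)" for x
    proof -
      have "ZZ Qt x = (\<Sum>r\<in>UNIV. (1 - t) * (QW r * exp (- dst x r)) + t * (if r = r0 then exp (- dst x r) else 0))"
        unfolding ZZ_def Qt_def by (intro sum.cong) (auto simp: algebra_simps)
      also have "\<dots> = (1 - t) * ZZ QW x + t * exp (- dst x r0)"
        by (simp add: sum.distrib sum_distrib_left[symmetric] ZZ_def)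
      also have "\<dots> = ZZ QW x * (1 + t * b x)"
        using Zp[of x] by (simp add: b_def A_def field_simps)
      finally show ?thesis .
    qed
    have "GG QW \<le> GG Qt"
      using FF_W Wmin[of "VQ Qt"] FF_VQ_le[OF Qt] by simp
    also have "GG Qt = GG QW - (\<Sum>x\<in>UNIV. PX \<delta> x * ln (1 + t * b x))"
    proof -
      have lnm: "ln (ZZ QW x * (1 + t * b x)) = ln (ZZ QW x) + ln (1 + t * b x)" for x
        using Zp[of x] pos[of x] by (simp add: ln_mult)
      have "PX \<delta> x * - ln (ZZ Qt x) = PX \<delta> x * - ln (ZZ QW x) - PX \<delta> x * ln (1 + t * b x)" for x
        unfolding ZQt lnm by (simp add: algebra_simps)
      then show ?thesis unfolding GG_def by (simp add: sum_subtractf)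
    qed
    finally have s1: "(\<Sum>x\<in>UNIV. PX \<delta> x * ln (1 + t * b x)) \<le> 0" by simp
    have "(\<Sum>x\<in>UNIV. PX \<delta> x * (t * b x / (1 + t * b x))) \<le> (\<Sum>x\<in>UNIV. PX \<delta> x * ln (1 + t * b x))"
    proof (intro sum_mono mult_left_mono)
      fix x
      have "ln (1 + t * b x) - ln 1 \<ge> 1 - 1 / (1 + t * b x)" by (rule ln_ratio_ge) (use pos in auto)
      moreover have "1 - 1 / (1 + t * b x) = t * b x / (1 + t * b x)" using pos[of x] by (simp add: field_simps)
      ultimately show "t * b x / (1 + t * b x) \<le> ln (1 + t * b x)" by simp
    qed simp
    with s1 have "(\<Sum>x\<in>UNIV. PX \<delta> x * (t * b x / (1 + t * b x))) \<le> 0" by simp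
    moreover have "(\<Sum>x\<in>UNIV. PX \<delta> x * (t * b x / (1 + t * b x))) = t * (\<Sum>x\<in>UNIV. PX \<delta> x * (b x / (1 + t * b x)))"
      by (simp add: sum_distrib_left mult.left_commute)
    ultimately show ?thesis using t by (simp add: mult_le_0_iff)
  qed
  have lim: "((\<lambda>t. \<Sum>x\<in>UNIV. PX \<delta> x * (b x / (1 + t * b x))) \<longlongrightarrow> (\<Sum>x\<in>UNIV. PX \<delta> x * (b x / (1 + 0 * b x)))) (at_right 0)"
    by (intro tendsto_intros) auto
  have ev: "\<forall>\<^sub>F t in at_right (0::real). (\<Sum>x\<in>UNIV. PX \<delta> x * (b x / (1 + t * b x))) \<le> 0"
  proof -
    have "\<forall>\<^sub>F t in at_right (0::real). t \<in> {0<..<1}" by (rule eventually_at_right_real) simp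
    then show ?thesis by (rule eventually_mono) (use phi_le in auto)
  qed
  have "(\<Sum>x\<in>UNIV. PX \<delta> x * (b x / (1 + 0 * b x))) \<le> 0"
    by (rule tendsto_upperbound[OF lim ev]) simp
  then have "(\<Sum>x\<in>UNIV. PX \<delta> x * b x) \<le> 0" by simp
  then have "(\<Sum>x\<in>UNIV. PX \<delta> x * A x) - (\<Sum>x\<in>UNIV. PX \<delta> x) \<le> 0"
    by (simp add: b_def algebra_simps sum_subtractf)
  then show ?thesis using PX_sum[OF d0 d1] by (simp add: A_def)
qed

end
end


lemma comb_pair:
  fixes a b :: real and r r' :: "bool \<times> sym"
  assumes eF: "a * dbar_s (Some False) (fst r) + b * d_x (Some False) (snd r) = a * dbar_s (Some False) (fst r') + b * d_x (Some False) (snd r')"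
    and eT: "a * dbar_s (Some True) (fst r) + b * d_x (Some True) (snd r) = a * dbar_s (Some True) (fst r') + b * d_x (Some True) (snd r')"
  shows "(b = 0 \<longrightarrow> a \<noteq> 0 \<longrightarrow> fst r = fst r') \<and> (a = 0 \<longrightarrow> b \<noteq> 0 \<longrightarrow> snd r = snd r') \<and>
    (a \<noteq> 0 \<longrightarrow> b \<noteq> 0 \<longrightarrow> r = r' \<or> (snd r = Some (fst r) \<and> snd r' = Some (fst r')) \<or> (snd r = Some (\<not> fst r) \<and> snd r' = Some (\<not> fst r')))"
proof -
  obtain z y z' y' where rr: "r = (z, y)" "r' = (z', y')" by fastforce
  show ?thesis using eF eT unfolding rr
    by (cases z; cases z'; cases y; cases y'; auto simp: dbar_s_def d_x_def split: if_splits)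
qed

context
  fixes \<delta> :: real
  assumes d0: "0 \<le> \<delta>" and d1: "\<delta> \<le> 1"
begin

definition subg :: "real \<times> real \<Rightarrow> real \<times> real \<Rightarrow> bool" where
  "subg p v \<longleftrightarrow> (\<forall>q\<in>Dadm \<delta>. Rf \<delta> p + inner v (q - p) \<le> Rf \<delta> q)"

lemma PX_pos_Some: assumes "\<delta> < 1" shows "PX \<delta> (Some b) > 0"
proof -
  note PX_Some[OF d0 d1, of b]
  then show ?thesis using assms by (simp add: field_simps)
qed

lemma sum_pmf_finite': "sum (pmf p) (UNIV::'a::finite set) = 1"
  using sum_pmf_finite[of p] by simp

lemma sum_PV_const: fixes V :: chan shows "(\<Sum>x\<in>UNIV. PX \<delta> x * (\<Sum>r\<in>UNIV. pmf (V x) r * c x)) = (\<Sum>x\<in>UNIV. PX \<delta> x * c x)"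
  by (simp add: sum_distrib_right[symmetric] sum_pmf_finite sum_pmf_finite')

lemma supp_sum:
  fixes V :: chan
  assumes "\<And>x r. PX \<delta> x > 0 \<Longrightarrow> pmf (V x) r > 0 \<Longrightarrow> g x r = h x r"
  shows "(\<Sum>x\<in>UNIV. PX \<delta> x * (\<Sum>r\<in>UNIV. pmf (V x) r * g x r)) = (\<Sum>x\<in>UNIV. PX \<delta> x * (\<Sum>r\<in>UNIV. pmf (V x) r * h x r))"
proof (rule sum.cong[OF refl])
  fix x
  show "PX \<delta> x * (\<Sum>r\<in>UNIV. pmf (V x) r * g x r) = PX \<delta> x * (\<Sum>r\<in>UNIV. pmf (V x) r * h x r)"
  proof (cases "PX \<delta> x > 0")
    case True
    have eq: "pmf (V x) r * g x r = pmf (V x) r * h x r" for r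
      using assms[OF True, of r] pmf_nonneg[of "V x" r] by (metis less_eq_real_def mult_zero_left)
    have "(\<Sum>r\<in>UNIV. pmf (V x) r * g x r) = (\<Sum>r\<in>UNIV. pmf (V x) r * h x r)"
      by (rule sum.cong[OF refl]) (rule eq)
    then show ?thesis by simp
  next
    case False then have "PX \<delta> x = 0" using pmf_nonneg[of "efcfX \<delta>" x] by linarith
    then show ?thesis by simp
  qed
qed

lemma in_Pstar: "feasible \<delta> a b V \<Longrightarrow> MI \<delta> V \<le> Rfun \<delta> a b \<Longrightarrow> V \<in> Pstar \<delta> a b"
  using R_le[OF d0 d1, of a b V] by (auto simp: Pstar_def)

lemma Pstar_feas: "W \<in> Pstar \<delta> a b \<Longrightarrow> feasible \<delta> a b W \<and> MI \<delta> W = Rfun \<delta> a b"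
  by (simp add: Pstar_def)

lemma subg_nonpos:
  assumes p: "(a, b) \<in> Dadm \<delta>" and v: "subg (a, b) v"
  shows "fst v \<le> 0" "snd v \<le> 0"
proof -
  have q1: "(a + 1, b) \<in> Dadm \<delta>" using p by (simp add: Dadm_iff[OF d0 d1])
  have "Rf \<delta> (a, b) + inner v ((a + 1, b) - (a, b)) \<le> Rf \<delta> (a + 1, b)" using v q1 unfolding subg_def by blast
  moreover have "Rf \<delta> (a + 1, b) \<le> Rf \<delta> (a, b)" using R_mono[OF d0 d1 p] by (simp add: Rf_def[OF d0 d1])
  ultimately show "fst v \<le> 0" by (cases v) simp
  have q2: "(a, b + 1) \<in> Dadm \<delta>" using p by (simp add: Dadm_iff[OF d0 d1])
  have "Rf \<delta> (a, b) + inner v ((a, b + 1) - (a, b)) \<le> Rf \<delta> (a, b + 1)" using v q2 unfolding subg_def by blast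
  moreover have "Rf \<delta> (a, b + 1) \<le> Rf \<delta> (a, b)" using R_mono[OF d0 d1 p] by (simp add: Rf_def[OF d0 d1])
  ultimately show "snd v \<le> 0" by (cases v) simp
qed

lemma subg_LB:
  assumes v: "subg (a, b) v"
  shows "Rf \<delta> (a, b) - fst v * a - snd v * b \<le> FF \<delta> (- fst v) (- snd v) V"
proof -
  have "Rfun \<delta> (Eds \<delta> V) (Edx \<delta> V) \<le> MI \<delta> V" by (rule R_le[OF d0 d1]) (simp add: feasible_def)
  moreover have "Rf \<delta> (a, b) + inner v ((Eds \<delta> V, Edx \<delta> V) - (a, b)) \<le> Rf \<delta> (Eds \<delta> V, Edx \<delta> V)"
    using v E_Dadm[OF d0 d1, of V] unfolding subg_def by blast
  ultimately show ?thesis by (cases v) (simp add: Rf_def[OF d0 d1] FF_def[OF d0 d1] algebra_simps)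
qed

lemma subg_slack:
  assumes p: "(a, b) \<in> Dadm \<delta>" and v: "subg (a, b) v" and W: "W \<in> Pstar \<delta> a b"
  shows "fst v * (a - Eds \<delta> W) = 0" "snd v * (b - Edx \<delta> W) = 0"
    "\<And>V. FF \<delta> (- fst v) (- snd v) W \<le> FF \<delta> (- fst v) (- snd v) V"
proof -
  have f: "Eds \<delta> W \<le> a" "Edx \<delta> W \<le> b" "MI \<delta> W = Rf \<delta> (a, b)"
    using W by (auto simp: Pstar_def feasible_def Rf_def[OF d0 d1])
  have n: "fst v \<le> 0" "snd v \<le> 0" using subg_nonpos[OF p v] by auto
  have t1: "fst v * (a - Eds \<delta> W) \<le> 0" using n f by (simp add: mult_nonpos_nonneg)
  have t2: "snd v * (b - Edx \<delta> W) \<le> 0" using n f by (simp add: mult_nonpos_nonneg)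
  have up: "FF \<delta> (- fst v) (- snd v) W = Rf \<delta> (a, b) - fst v * a - snd v * b + fst v * (a - Eds \<delta> W) + snd v * (b - Edx \<delta> W)"
    using f by (simp add: FF_def[OF d0 d1] algebra_simps)
  have lb: "Rf \<delta> (a, b) - fst v * a - snd v * b \<le> FF \<delta> (- fst v) (- snd v) W" by (rule subg_LB[OF v])
  show "fst v * (a - Eds \<delta> W) = 0" using up lb t1 t2 by linarith
  show "snd v * (b - Edx \<delta> W) = 0" using up lb t1 t2 by linarith
  fix V
  show "FF \<delta> (- fst v) (- snd v) W \<le> FF \<delta> (- fst v) (- snd v) V"
    using up t1 t2 subg_LB[OF v, of V] by linarith
qed

end


definition flipc :: "chan \<Rightarrow> chan" where "flipc V = (\<lambda>x. map_pmf (\<lambda>r. (\<not> fst r, snd r)) (V x))"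
definition ysetc :: "sym \<Rightarrow> chan \<Rightarrow> chan" where "ysetc y0 V = (\<lambda>x. map_pmf (\<lambda>r. (fst r, y0)) (V x))"
definition ycopyc :: "chan \<Rightarrow> chan" where "ycopyc V = (\<lambda>x. map_pmf (\<lambda>r. (fst r, Some (fst r))) (V x))"

lemma dbar_not: "dbar_s x (\<not> z) = 1 - dbar_s x z"
  by (cases x) (auto simp: dbar_s_def)

lemma dx_copy: "d_x x (Some z) = dbar_s x z + (if x = None then 1/2 else 0)"
  by (cases x) (auto simp: dbar_s_def d_x_def)

lemma dx_anti: "d_x x (Some (\<not> z)) = 1 - dbar_s x z + (if x = None then 1/2 else 0)"
  by (cases x) (auto simp: dbar_s_def d_x_def)

context
  fixes \<delta> :: real
  assumes d0: "0 \<le> \<delta>" and d1: "\<delta> \<le> 1"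
begin

lemma sum_None_half: "(\<Sum>x\<in>UNIV. PX \<delta> x * (if x = None then 1/2 else 0)) = \<delta> / 2"
  by (simp add: sum_sym PX_None[OF d0 d1])

lemma Eds_alt: "Eds \<delta> V = (\<Sum>x\<in>UNIV. PX \<delta> x * (\<Sum>r\<in>UNIV. pmf (V x) r * dbar_s x (fst r)))"
  unfolding Eds_def ..

lemma Edx_alt: "Edx \<delta> V = (\<Sum>x\<in>UNIV. PX \<delta> x * (\<Sum>r\<in>UNIV. pmf (V x) r * d_x x (snd r)))"
  unfolding Edx_def ..

lemma lin_aux: "(\<Sum>x\<in>UNIV. PX \<delta> x * (\<Sum>r\<in>UNIV. pmf (V x) r * (g x r + c x))) =
   (\<Sum>x\<in>UNIV. PX \<delta> x * (\<Sum>r\<in>UNIV. pmf (V x) r * g x r)) + (\<Sum>x\<in>UNIV. PX \<delta> x * c x)"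
  for V :: chan
  by (simp add: distrib_left sum.distrib sum_distrib_left[symmetric] sum_distrib_right[symmetric] sum_pmf_finite'[OF d0 d1] mult.assoc)

lemma lin_aux2: "(\<Sum>x\<in>UNIV. PX \<delta> x * (\<Sum>r\<in>UNIV. pmf (V x) r * (1 - g x r + c x))) =
   1 - (\<Sum>x\<in>UNIV. PX \<delta> x * (\<Sum>r\<in>UNIV. pmf (V x) r * g x r)) + (\<Sum>x\<in>UNIV. PX \<delta> x * c x)"
  for V :: chan
proof -
  have "(\<Sum>x\<in>UNIV. PX \<delta> x * (\<Sum>r\<in>UNIV. pmf (V x) r * (1 - g x r + c x))) =
      (\<Sum>x\<in>UNIV. PX \<delta> x * (\<Sum>r\<in>UNIV. pmf (V x) r * (- g x r + (1 + c x))))"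
    by (simp add: algebra_simps)
  also have "\<dots> = - (\<Sum>x\<in>UNIV. PX \<delta> x * (\<Sum>r\<in>UNIV. pmf (V x) r * g x r)) + (\<Sum>x\<in>UNIV. PX \<delta> x * (1 + c x))"
    using lin_aux[of V "\<lambda>x r. - g x r" "\<lambda>x. 1 + c x"] by (simp add: sum_negf)
  also have "(\<Sum>x\<in>UNIV. PX \<delta> x * (1 + c x)) = 1 + (\<Sum>x\<in>UNIV. PX \<delta> x * c x)"
    by (simp add: distrib_left sum.distrib PX_sum[OF d0 d1])
  finally show ?thesis by simp
qed

lemma Eds_flip: "Eds \<delta> (flipc V) = 1 - Eds \<delta> V"
proof -
  have "Eds \<delta> (flipc V) = (\<Sum>x\<in>UNIV. PX \<delta> x * (\<Sum>r\<in>UNIV. pmf (V x) r * (1 - dbar_s x (fst r) + 0)))"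
    unfolding flipc_def Eds_map[OF d0 d1] by (simp add: dbar_not)
  also have "\<dots> = 1 - Eds \<delta> V" using lin_aux2[of V "\<lambda>x r. dbar_s x (fst r)" "\<lambda>x. 0"] by (simp add: Eds_alt)
  finally show ?thesis .
qed

lemma Edx_flip: "Edx \<delta> (flipc V) = Edx \<delta> V"
  unfolding flipc_def Edx_map[OF d0 d1] by (simp add: Edx_alt)

lemma Eds_yset: "Eds \<delta> (ysetc y0 V) = Eds \<delta> V"
  unfolding ysetc_def Eds_map[OF d0 d1] by (simp add: Eds_alt)

lemma Edx_yset: "Edx \<delta> (ysetc y0 V) = (\<Sum>x\<in>UNIV. PX \<delta> x * d_x x y0)"
  unfolding ysetc_def Edx_map[OF d0 d1] by (simp add: sum_PV_const[OF d0 d1])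

lemma Eds_ycopy: "Eds \<delta> (ycopyc V) = Eds \<delta> V"
  unfolding ycopyc_def Eds_map[OF d0 d1] by (simp add: Eds_alt)

lemma Edx_ycopy: "Edx \<delta> (ycopyc V) = Eds \<delta> V + \<delta> / 2"
proof -
  have "Edx \<delta> (ycopyc V) = (\<Sum>x\<in>UNIV. PX \<delta> x * (\<Sum>r\<in>UNIV. pmf (V x) r * (dbar_s x (fst r) + (if x = None then 1/2 else 0))))"
    unfolding ycopyc_def Edx_map[OF d0 d1] by (simp add: dx_copy)
  also have "\<dots> = Eds \<delta> V + \<delta> / 2"
    using lin_aux[of V "\<lambda>x r. dbar_s x (fst r)" "\<lambda>x. if x = None then 1/2 else 0"] by (simp add: Eds_alt sum_None_half)
  finally show ?thesis .
qed

lemma MI_flip: "MI \<delta> (flipc V) \<le> MI \<delta> V" unfolding flipc_def by (rule MI_map[OF d0 d1])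
lemma MI_yset: "MI \<delta> (ysetc y0 V) \<le> MI \<delta> V" unfolding ysetc_def by (rule MI_map[OF d0 d1])
lemma MI_ycopy: "MI \<delta> (ycopyc V) \<le> MI \<delta> V" unfolding ycopyc_def by (rule MI_map[OF d0 d1])

lemma shift_s:
  assumes W: "W \<in> Pstar \<delta> a b" and t: "0 \<le> t"
    and lb: "\<And>V. feasible \<delta> (a + t) b V \<Longrightarrow> Rfun \<delta> a b \<le> MI \<delta> V"
  shows "W \<in> Pstar \<delta> (a + t) b"
proof -
  have f: "feasible \<delta> a b W" "MI \<delta> W = Rfun \<delta> a b" using W by (auto simp: Pstar_def)
  have f2: "feasible \<delta> (a + t) b W" using f t by (auto simp: feasible_def)
  have "Rfun \<delta> a b \<le> Rfun \<delta> (a + t) b"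
    unfolding Rfun_def[of \<delta> "a + t" b]
    by (rule cInf_greatest) (use f2 lb in auto)
  moreover have "Rfun \<delta> (a + t) b \<le> MI \<delta> W" by (rule R_le[OF d0 d1 f2])
  ultimately show ?thesis using f f2 by (simp add: Pstar_def)
qed

lemma shift_x:
  assumes W: "W \<in> Pstar \<delta> a b" and t: "0 \<le> t"
    and lb: "\<And>V. feasible \<delta> a (b + t) V \<Longrightarrow> Rfun \<delta> a b \<le> MI \<delta> V"
  shows "W \<in> Pstar \<delta> a (b + t)"
proof -
  have f: "feasible \<delta> a b W" "MI \<delta> W = Rfun \<delta> a b" using W by (auto simp: Pstar_def)
  have f2: "feasible \<delta> a (b + t) W" using f t by (auto simp: feasible_def)
  have "Rfun \<delta> a b \<le> Rfun \<delta> a (b + t)"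
    unfolding Rfun_def[of \<delta> a "b + t"]
    by (rule cInf_greatest) (use f2 lb in auto)
  moreover have "Rfun \<delta> a (b + t) \<le> MI \<delta> W" by (rule R_le[OF d0 d1 f2])
  ultimately show ?thesis using f f2 by (simp add: Pstar_def)
qed

lemma cell_s:
  assumes p: "(a, b) \<in> D_in \<delta>" and noS: "\<forall>W'\<in>Pstar \<delta> a b. \<not> Eds \<delta> W' < a"
  shows "\<exists>e>0. \<forall>t. 0 < t \<and> t < e \<longrightarrow> (\<forall>W'\<in>Pstar \<delta> (a + t) b. \<not> Eds \<delta> W' < a + t)"
proof -
  have "(a, b) \<in> interior (D_sx \<delta>) \<or> (a, b) \<in> interior (D_sbar_x \<delta>) \<or> (a, b) \<in> interior (D_s_xbar \<delta>) \<or> (a, b) \<in> interior (D_sbar_xbar \<delta>)"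
    using p by (auto simp: D_in_def)
  then show ?thesis
  proof (elim disjE)
    assume "(a, b) \<in> interior (D_sbar_x \<delta>)"
    then have "(a, b) \<in> D_sbar_x \<delta>" using interior_subset by blast
    then show ?thesis using noS by (auto simp: D_sbar_x_def)
  next
    assume "(a, b) \<in> interior (D_sbar_xbar \<delta>)"
    then have "(a, b) \<in> D_sbar_xbar \<delta>" using interior_subset by blast
    then show ?thesis using noS by (auto simp: D_sbar_xbar_def)
  next
    assume "(a, b) \<in> interior (D_sx \<delta>)"
    then obtain e where e: "e > 0" "ball (a, b) e \<subseteq> D_sx \<delta>" using mem_interior by blast
    have "(a + t, b) \<in> D_sx \<delta>" if "0 < t" "t < e" for t
      using e that by (intro subsetD[OF e(2)]) (simp add: dist_Pair_Pair dist_real_def)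
    then show ?thesis using e by (intro exI[of _ e]) (auto simp: D_sx_def)
  next
    assume "(a, b) \<in> interior (D_s_xbar \<delta>)"
    then obtain e where e: "e > 0" "ball (a, b) e \<subseteq> D_s_xbar \<delta>" using mem_interior by blast
    have "(a + t, b) \<in> D_s_xbar \<delta>" if "0 < t" "t < e" for t
      using e that by (intro subsetD[OF e(2)]) (simp add: dist_Pair_Pair dist_real_def)
    then show ?thesis using e by (intro exI[of _ e]) (auto simp: D_s_xbar_def)
  qed
qed

lemma cell_x:
  assumes p: "(a, b) \<in> D_in \<delta>" and noX: "\<forall>W'\<in>Pstar \<delta> a b. \<not> Edx \<delta> W' < b"
  shows "\<exists>e>0. \<forall>t. 0 < t \<and> t < e \<longrightarrow> (\<forall>W'\<in>Pstar \<delta> a (b + t). \<not> Edx \<delta> W' < b + t)"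
proof -
  have "(a, b) \<in> interior (D_sx \<delta>) \<or> (a, b) \<in> interior (D_sbar_x \<delta>) \<or> (a, b) \<in> interior (D_s_xbar \<delta>) \<or> (a, b) \<in> interior (D_sbar_xbar \<delta>)"
    using p by (auto simp: D_in_def)
  then show ?thesis
  proof (elim disjE)
    assume "(a, b) \<in> interior (D_s_xbar \<delta>)"
    then have "(a, b) \<in> D_s_xbar \<delta>" using interior_subset by blast
    then show ?thesis using noX by (auto simp: D_s_xbar_def)
  next
    assume "(a, b) \<in> interior (D_sbar_xbar \<delta>)"
    then have "(a, b) \<in> D_sbar_xbar \<delta>" using interior_subset by blast
    then show ?thesis using noX by (auto simp: D_sbar_xbar_def)
  next
    assume "(a, b) \<in> interior (D_sx \<delta>)"
    then obtain e where e: "e > 0" "ball (a, b) e \<subseteq> D_sx \<delta>" using mem_interior by blast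
    have "(a, b + t) \<in> D_sx \<delta>" if "0 < t" "t < e" for t
      using e that by (intro subsetD[OF e(2)]) (simp add: dist_Pair_Pair dist_real_def)
    then show ?thesis using e by (intro exI[of _ e]) (auto simp: D_sx_def)
  next
    assume "(a, b) \<in> interior (D_sbar_x \<delta>)"
    then obtain e where e: "e > 0" "ball (a, b) e \<subseteq> D_sbar_x \<delta>" using mem_interior by blast
    have "(a, b + t) \<in> D_sbar_x \<delta>" if "0 < t" "t < e" for t
      using e that by (intro subsetD[OF e(2)]) (simp add: dist_Pair_Pair dist_real_def)
    then show ?thesis using e by (intro exI[of _ e]) (auto simp: D_sbar_x_def)
  qed
qed

lemma HS:
  assumes p: "(a, b) \<in> D_in \<delta>" and W: "W \<in> Pstar \<delta> a b" and noS: "\<forall>W'\<in>Pstar \<delta> a b. \<not> Eds \<delta> W' < a"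
    and lb: "\<And>t V. 0 < t \<Longrightarrow> feasible \<delta> (a + t) b V \<Longrightarrow> Rfun \<delta> a b \<le> MI \<delta> V"
  shows False
proof -
  obtain e where e: "e > 0" "\<And>t. 0 < t \<Longrightarrow> t < e \<Longrightarrow> \<forall>W'\<in>Pstar \<delta> (a + t) b. \<not> Eds \<delta> W' < a + t"
    using cell_s[OF p noS] by blast
  have "W \<in> Pstar \<delta> (a + e/2) b" by (intro shift_s[OF W]) (use e(1) lb[of "e/2"] in auto)
  moreover have "Eds \<delta> W \<le> a" using W by (simp add: Pstar_def feasible_def)
  ultimately show False using e(2)[of "e/2"] e(1) by force
qed

lemma HX:
  assumes p: "(a, b) \<in> D_in \<delta>" and W: "W \<in> Pstar \<delta> a b" and noX: "\<forall>W'\<in>Pstar \<delta> a b. \<not> Edx \<delta> W' < b"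
    and lb: "\<And>t V. 0 < t \<Longrightarrow> feasible \<delta> a (b + t) V \<Longrightarrow> Rfun \<delta> a b \<le> MI \<delta> V"
  shows False
proof -
  obtain e where e: "e > 0" "\<And>t. 0 < t \<Longrightarrow> t < e \<Longrightarrow> \<forall>W'\<in>Pstar \<delta> a (b + t). \<not> Edx \<delta> W' < b + t"
    using cell_x[OF p noX] by blast
  have "W \<in> Pstar \<delta> a (b + e/2)" by (intro shift_x[OF W]) (use e(1) lb[of "e/2"] in auto)
  moreover have "Edx \<delta> W \<le> b" using W by (simp add: Pstar_def feasible_def)
  ultimately show False using e(2)[of "e/2"] e(1) by force
qed

lemma H_half:
  assumes p: "(a, b) \<in> D_in \<delta>" and W: "W \<in> Pstar \<delta> a b" and noS: "\<forall>W'\<in>Pstar \<delta> a b. \<not> Eds \<delta> W' < a"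
    and a: "a = 1/2"
  shows False
proof (rule HS[OF p W noS])
  fix t V assume t: "0 < t" and V: "feasible \<delta> (a + t) b V"
  show "Rfun \<delta> a b \<le> MI \<delta> V"
  proof (cases "Eds \<delta> V \<le> a")
    case True
    then have "feasible \<delta> a b V" using V by (simp add: feasible_def)
    then show ?thesis by (rule R_le[OF d0 d1])
  next
    case False
    then have "feasible \<delta> a b (flipc V)" using V a by (simp add: feasible_def Eds_flip Edx_flip)
    then have "Rfun \<delta> a b \<le> MI \<delta> (flipc V)" by (rule R_le[OF d0 d1])
    then show ?thesis using MI_flip[of V] by simp
  qed
qed

end


context
  fixes \<delta> :: real
  assumes d0: "0 \<le> \<delta>" and d1: "\<delta> \<le> 1"
begin

lemma Din_int: "(a, b) \<in> D_in \<delta> \<Longrightarrow> (a, b) \<in> interior (Dadm \<delta>)"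
proof -
  have "D_sx \<delta> \<subseteq> Dadm \<delta>" "D_sbar_x \<delta> \<subseteq> Dadm \<delta>" "D_s_xbar \<delta> \<subseteq> Dadm \<delta>" "D_sbar_xbar \<delta> \<subseteq> Dadm \<delta>"
    by (auto simp: D_sx_def D_sbar_x_def D_s_xbar_def D_sbar_xbar_def)
  then have "D_in \<delta> \<subseteq> interior (Dadm \<delta>)"
    unfolding D_in_def by (meson Un_least interior_mono)
  then show "(a, b) \<in> D_in \<delta> \<Longrightarrow> (a, b) \<in> interior (Dadm \<delta>)" by blast
qed

lemma int_Dadm: assumes "(a, b) \<in> interior (Dadm \<delta>)" shows "\<delta> / 2 < a" "0 < b"
proof -
  obtain e where e: "e > 0" "ball (a, b) e \<subseteq> Dadm \<delta>" using assms mem_interior by blast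
  have "(a - e/2, b) \<in> Dadm \<delta>" using e by (intro subsetD[OF e(2)]) (simp add: dist_Pair_Pair dist_real_def)
  then show "\<delta> / 2 < a" using e by (simp add: Dadm_iff[OF d0 d1])
  have "(a, b - e/2) \<in> Dadm \<delta>" using e by (intro subsetD[OF e(2)]) (simp add: dist_Pair_Pair dist_real_def)
  then show "0 < b" using e by (simp add: Dadm_iff[OF d0 d1])
qed

definition Wc :: chan where "Wc = (\<lambda>x. return_pmf (False, None))"

lemma Wc_facts: "MI \<delta> Wc = 0" "Eds \<delta> Wc = 1/2" "Edx \<delta> Wc = 1 - \<delta>"
proof -
  have o: "out_marg \<delta> Wc r = pmf (return_pmf (False, None)) r" for r
    unfolding out_marg_def Wc_def by (simp add: sum_distrib_right[symmetric] PX_sum[OF d0 d1])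
  show "MI \<delta> Wc = 0" unfolding MI_def o by (auto simp: Wc_def indicator_def of_bool_def intro!: sum.neutral)
  have sr: "(\<Sum>r\<in>UNIV. pmf (return_pmf a) r * g r) = g a" for a and g :: "bool \<times> sym \<Rightarrow> real"
  proof -
    have "(\<Sum>r\<in>UNIV. pmf (return_pmf a) r * g r) = (\<Sum>r\<in>UNIV. if a = r then g r else 0)"
      by (intro sum.cong) (auto simp: indicator_def)
    then show ?thesis by simp
  qed
  have e1: "Edx \<delta> Wc = (\<Sum>x\<in>UNIV. PX \<delta> x * d_x x None)"
    unfolding Edx_def Wc_def using sr by simp
  have "d_x None None = 0" "d_x (Some b) None = 1" for b by (simp_all add: d_x_def)
  then show "Edx \<delta> Wc = 1 - \<delta>" unfolding e1 sum_sym PX_None[OF d0 d1] PX_Some[OF d0 d1] by simp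
  show "Eds \<delta> Wc = 1/2" unfolding Eds_def Wc_def
    by (simp add: sum_sym sum_out PX_None[OF d0 d1] PX_Some[OF d0 d1] dbar_s_def field_simps)
qed

lemma zconst_half:
  assumes "\<And>x r. PX \<delta> x > 0 \<Longrightarrow> pmf (V x) r > 0 \<Longrightarrow> fst r = z0"
  shows "Eds \<delta> V = 1/2"
proof -
  have "Eds \<delta> V = (\<Sum>x\<in>UNIV. PX \<delta> x * (\<Sum>r\<in>UNIV. pmf (V x) r * dbar_s x z0))"
    unfolding Eds_alt[OF d0 d1] by (rule supp_sum[OF d0 d1]) (use assms in auto)
  also have "\<dots> = (\<Sum>x\<in>UNIV. PX \<delta> x * dbar_s x z0)" by (rule sum_PV_const[OF d0 d1])
  also have "\<dots> = 1/2"
    by (cases z0) (simp_all add: sum_sym PX_None[OF d0 d1] PX_Some[OF d0 d1] dbar_s_def field_simps)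
  finally show ?thesis .
qed

lemma subg_unique:
  assumes p: "(a, b) \<in> D_in \<delta>" and W: "W \<in> Pstar \<delta> a b"
    and v: "subg \<delta> (a, b) v" and v': "subg \<delta> (a, b) v'"
  shows "v = v'"
proof (rule ccontr)
  assume ne: "v \<noteq> v'"
  have pint: "(a, b) \<in> interior (Dadm \<delta>)" by (rule Din_int[OF p])
  have pD: "(a, b) \<in> Dadm \<delta>" using pint interior_subset by blast
  define Ds where "Ds = fst v - fst v'"
  define Dx where "Dx = snd v - snd v'"
  have DD: "Ds \<noteq> 0 \<or> Dx \<noteq> 0" using ne by (cases v; cases v') (auto simp: Ds_def Dx_def)
  have noS: "\<forall>W'\<in>Pstar \<delta> a b. \<not> Eds \<delta> W' < a" if "Ds \<noteq> 0"
  proof (intro ballI notI)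
    fix W' assume W': "W' \<in> Pstar \<delta> a b" and lt: "Eds \<delta> W' < a"
    have "fst v * (a - Eds \<delta> W') = 0" by (rule subg_slack(1)[OF d0 d1 pD v W'])
    moreover have "fst v' * (a - Eds \<delta> W') = 0" by (rule subg_slack(1)[OF d0 d1 pD v' W'])
    ultimately show False using lt that by (simp add: Ds_def)
  qed
  have noX: "\<forall>W'\<in>Pstar \<delta> a b. \<not> Edx \<delta> W' < b" if "Dx \<noteq> 0"
  proof (intro ballI notI)
    fix W' assume W': "W' \<in> Pstar \<delta> a b" and lt: "Edx \<delta> W' < b"
    have "snd v * (b - Edx \<delta> W') = 0" by (rule subg_slack(2)[OF d0 d1 pD v W'])
    moreover have "snd v' * (b - Edx \<delta> W') = 0" by (rule subg_slack(2)[OF d0 d1 pD v' W'])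
    ultimately show False using lt that by (simp add: Dx_def)
  qed
  have Wf: "Eds \<delta> W \<le> a" "Edx \<delta> W \<le> b" "MI \<delta> W = Rfun \<delta> a b" using W by (auto simp: Pstar_def feasible_def)
  show False
  proof (cases "\<delta> = 1")
    case True
    have ab: "\<delta> / 2 < a" "0 < b" using int_Dadm[OF pint] by auto
    have "Wc \<in> Pstar \<delta> a b"
      using Wc_facts ab True R_nonneg[OF d0 d1 pD] by (intro in_Pstar) (auto simp: feasible_def)
    moreover have "Eds \<delta> Wc < a" "Edx \<delta> Wc < b" using Wc_facts ab True by auto
    ultimately show False using DD noS noX by blast
  next
    case False
    then have dl: "\<delta> < 1" using d1 by simp
    let ?Q = "out_marg \<delta> W"
    have Wmin1: "\<And>V. FF \<delta> (- fst v) (- snd v) W \<le> FF \<delta> (- fst v) (- snd v) V" by (rule subg_slack(3)[OF d0 d1 pD v W])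
    have Wmin2: "\<And>V. FF \<delta> (- fst v') (- snd v') W \<le> FF \<delta> (- fst v') (- snd v') V" by (rule subg_slack(3)[OF d0 d1 pD v' W])
    have QW: "QW \<delta> W = ?Q" using QW_def[OF d0 d1 Wmin1] .
    have eqn: "Ds * dbar_s (Some bb) (fst r) + Dx * d_x (Some bb) (snd r) =
        ln (ZZ (- fst v) (- snd v) ?Q (Some bb)) - ln (ZZ (- fst v') (- snd v') ?Q (Some bb))"
      if qr: "?Q r > 0" for bb r
    proof -
      let ?x = "Some bb"
      have px: "PX \<delta> ?x > 0" by (rule PX_pos_Some[OF d0 d1 dl])
      have s1: "pmf (W ?x) r = ?Q r * exp (- dst (- fst v) (- snd v) ?x r) / ZZ (- fst v) (- snd v) ?Q ?x"
        using W_struct[OF d0 d1 Wmin1 px] QW by simp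
      have s2: "pmf (W ?x) r = ?Q r * exp (- dst (- fst v') (- snd v') ?x r) / ZZ (- fst v') (- snd v') ?Q ?x"
        using W_struct[OF d0 d1 Wmin2 px] QW_def[OF d0 d1 Wmin2] by simp
      have Qd: "distr ?Q" using QW_distr[OF d0 d1 Wmin1] QW by simp
      have z1: "ZZ (- fst v) (- snd v) ?Q ?x > 0" by (rule ZZ_pos[OF d0 d1 Qd])
      have z2: "ZZ (- fst v') (- snd v') ?Q ?x > 0" by (rule ZZ_pos[OF d0 d1 Qd])
      have "exp (- dst (- fst v) (- snd v) ?x r) * ZZ (- fst v') (- snd v') ?Q ?x
          = exp (- dst (- fst v') (- snd v') ?x r) * ZZ (- fst v) (- snd v) ?Q ?x"
        using s1 s2 qr z1 z2 by (simp add: field_simps)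
      then have "ln (exp (- dst (- fst v) (- snd v) ?x r) * ZZ (- fst v') (- snd v') ?Q ?x)
          = ln (exp (- dst (- fst v') (- snd v') ?x r) * ZZ (- fst v) (- snd v) ?Q ?x)" by simp
      then have "- dst (- fst v) (- snd v) ?x r + ln (ZZ (- fst v') (- snd v') ?Q ?x)
          = - dst (- fst v') (- snd v') ?x r + ln (ZZ (- fst v) (- snd v) ?Q ?x)"
        using z1 z2 by (simp add: ln_mult)
      then show ?thesis unfolding dst_def[OF d0 d1] Ds_def Dx_def by (simp add: algebra_simps)
    qed
    have pair: "(Dx = 0 \<longrightarrow> Ds \<noteq> 0 \<longrightarrow> fst r = fst r') \<and> (Ds = 0 \<longrightarrow> Dx \<noteq> 0 \<longrightarrow> snd r = snd r') \<and>
        (Ds \<noteq> 0 \<longrightarrow> Dx \<noteq> 0 \<longrightarrow> r = r' \<or> (snd r = Some (fst r) \<and> snd r' = Some (fst r')) \<or> (snd r = Some (\<not> fst r) \<and> snd r' = Some (\<not> fst r')))"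
      if "?Q r > 0" "?Q r' > 0" for r r'
      by (rule comb_pair) (use eqn that in auto)
    have supp: "?Q r > 0" if "PX \<delta> x > 0" "pmf (W x) r > 0" for x r
      using out_pos[OF d0 d1, of x W r] that by blast
    obtain r1 where r1: "?Q r1 > 0"
      using out_sum[OF d0 d1, of W] by (metis less_irrefl sum.neutral zero_neq_one out_nonneg[OF d0 d1] less_eq_real_def)
    have tightS: "Eds \<delta> W = a" if "Ds \<noteq> 0" using noS[OF that] W Wf by force
    have tightX: "Edx \<delta> W = b" if "Dx \<noteq> 0" using noX[OF that] W Wf by force
    have case_half: False if "Ds \<noteq> 0" and z: "\<And>r. ?Q r > 0 \<Longrightarrow> fst r = fst r1"
    proof -
      have "Eds \<delta> W = 1/2" by (rule zconst_half) (use z supp in blast)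
      then have "a = 1/2" using tightS[OF that(1)] by simp
      then show False using H_half[OF d0 d1 p W noS[OF that(1)]] by simp
    qed
    show False
    proof (cases "Dx = 0")
      case True
      then have "Ds \<noteq> 0" using DD by simp
      moreover have "fst r = fst r1" if "?Q r > 0" for r using pair[OF that r1] True \<open>Ds \<noteq> 0\<close> by blast
      ultimately show False using case_half by blast
    next
      case Dx: False
      show False
      proof (cases "Ds = 0")
        case True
        define y0 where "y0 = snd r1"
        have yc: "snd r = y0" if "?Q r > 0" for r using pair[OF that r1] True Dx by (simp add: y0_def)
        have "Edx \<delta> W = (\<Sum>x\<in>UNIV. PX \<delta> x * (\<Sum>r\<in>UNIV. pmf (W x) r * d_x x y0))"
          unfolding Edx_alt[OF d0 d1] by (rule supp_sum[OF d0 d1]) (use yc supp in auto)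
        also have "\<dots> = (\<Sum>x\<in>UNIV. PX \<delta> x * d_x x y0)" by (rule sum_PV_const[OF d0 d1])
        finally have EW: "Edx \<delta> W = (\<Sum>x\<in>UNIV. PX \<delta> x * d_x x y0)" .
        show False
        proof (rule HX[OF d0 d1 p W noX[OF Dx]])
          fix t V assume "0 < t" and V: "feasible \<delta> a (b + t) V"
          have "feasible \<delta> a b (ysetc y0 V)"
            using V EW tightX[OF Dx] by (simp add: feasible_def Eds_yset[OF d0 d1] Edx_yset[OF d0 d1])
          then have "Rfun \<delta> a b \<le> MI \<delta> (ysetc y0 V)" by (rule R_le[OF d0 d1])
          then show "Rfun \<delta> a b \<le> MI \<delta> V" using MI_yset[OF d0 d1, of y0 V] by simp
        qed
      next
        case Ds: False
        have ta: "Eds \<delta> W = a" by (rule tightS[OF Ds])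
        have tb: "Edx \<delta> W = b" by (rule tightX[OF Dx])
        show False
        proof (cases "\<forall>r. ?Q r > 0 \<longrightarrow> r = r1")
          case True
          then show False using case_half[OF Ds] by blast
        next
          case False
          then obtain r2 where r2: "?Q r2 > 0" "r2 \<noteq> r1" by blast
          have "(snd r1 = Some (fst r1) \<and> snd r2 = Some (fst r2)) \<or> (snd r1 = Some (\<not> fst r1) \<and> snd r2 = Some (\<not> fst r2))"
            using pair[OF r1 r2(1)] Ds Dx r2(2) by auto
          then show False
          proof
            assume "snd r1 = Some (fst r1) \<and> snd r2 = Some (fst r2)"
            then have k1: "snd r1 = Some (fst r1)" by simp
            have K3: "snd r = Some (fst r)" if "?Q r > 0" for r
              using pair[OF that r1] Ds Dx k1 by (cases "r = r1") auto
            have "Edx \<delta> W = (\<Sum>x\<in>UNIV. PX \<delta> x * (\<Sum>r\<in>UNIV. pmf (W x) r * d_x x (Some (fst r))))"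
              unfolding Edx_alt[OF d0 d1] by (rule supp_sum[OF d0 d1]) (use K3 supp in auto)
            also have "\<dots> = (\<Sum>x\<in>UNIV. PX \<delta> x * (\<Sum>r\<in>UNIV. pmf (W x) r * (dbar_s x (fst r) + (if x = None then 1/2 else 0))))"
              by (simp add: dx_copy)
            also have "\<dots> = Eds \<delta> W + \<delta> / 2"
              using lin_aux[OF d0 d1, of W "\<lambda>x r. dbar_s x (fst r)" "\<lambda>x. if x = None then 1/2 else 0"]
              by (simp add: Eds_alt[OF d0 d1] sum_None_half[OF d0 d1])
            finally have EW: "b = a + \<delta> / 2" using ta tb by simp
            show False
            proof (rule HX[OF d0 d1 p W noX[OF Dx]])
              fix t V assume "0 < t" and V: "feasible \<delta> a (b + t) V"
              have "feasible \<delta> a b (ycopyc V)"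
                using V EW by (simp add: feasible_def Eds_ycopy[OF d0 d1] Edx_ycopy[OF d0 d1])
              then have "Rfun \<delta> a b \<le> MI \<delta> (ycopyc V)" by (rule R_le[OF d0 d1])
              then show "Rfun \<delta> a b \<le> MI \<delta> V" using MI_ycopy[OF d0 d1, of V] by simp
            qed
          next
            assume "snd r1 = Some (\<not> fst r1) \<and> snd r2 = Some (\<not> fst r2)"
            then have k1: "snd r1 = Some (\<not> fst r1)" by simp
            have K4: "snd r = Some (\<not> fst r)" if "?Q r > 0" for r
              using pair[OF that r1] Ds Dx k1 by (cases "r = r1") auto
            have "Edx \<delta> W = (\<Sum>x\<in>UNIV. PX \<delta> x * (\<Sum>r\<in>UNIV. pmf (W x) r * d_x x (Some (\<not> fst r))))"
              unfolding Edx_alt[OF d0 d1] by (rule supp_sum[OF d0 d1]) (use K4 supp in auto)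
            also have "\<dots> = (\<Sum>x\<in>UNIV. PX \<delta> x * (\<Sum>r\<in>UNIV. pmf (W x) r * (1 - dbar_s x (fst r) + (if x = None then 1/2 else 0))))"
              by (simp add: dx_anti)
            also have "\<dots> = 1 - Eds \<delta> W + \<delta> / 2"
              using lin_aux2[OF d0 d1, of W "\<lambda>x r. dbar_s x (fst r)" "\<lambda>x. if x = None then 1/2 else 0"]
              by (simp add: Eds_alt[OF d0 d1] sum_None_half[OF d0 d1])
            finally have EW: "b = 1 - a + \<delta> / 2" using ta tb by simp
            consider "a < 1/2" | "a > 1/2" | "a = 1/2" by linarith
            then show False
            proof cases
              case 1
              have "ycopyc W \<in> Pstar \<delta> a b"
                using Wf EW 1 MI_ycopy[OF d0 d1, of W]
                by (intro in_Pstar[OF d0 d1]) (auto simp: feasible_def Eds_ycopy[OF d0 d1] Edx_ycopy[OF d0 d1] ta)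
              moreover have "Edx \<delta> (ycopyc W) < b" using EW 1 ta by (simp add: Edx_ycopy[OF d0 d1])
              ultimately show False using noX[OF Dx] by blast
            next
              case 2
              have "flipc W \<in> Pstar \<delta> a b"
                using Wf EW 2 MI_flip[OF d0 d1, of W]
                by (intro in_Pstar[OF d0 d1]) (auto simp: feasible_def Eds_flip[OF d0 d1] Edx_flip[OF d0 d1] ta)
              moreover have "Eds \<delta> (flipc W) < a" using 2 ta by (simp add: Eds_flip[OF d0 d1])
              ultimately show False using noS[OF Ds] by blast
            next
              case 3
              then show False using H_half[OF d0 d1 p W noS[OF Ds]] by simp
            qed
          qed
        qed
      qed
    qed
  qed
qed

end


context
  fixes \<delta> :: real
  assumes d0: "0 \<le> \<delta>" and d1: "\<delta> \<le> 1"
begin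

lemma slice_s_convex: assumes "0 \<le> b" shows "convex_on {\<delta>/2..} (\<lambda>t. Rfun \<delta> t b)"
proof (rule convex_onI)
  show "convex {\<delta>/2..}" by simp
  fix t x y :: real assume t: "0 < t" "t < 1" and x: "x \<in> {\<delta>/2..}" and y: "y \<in> {\<delta>/2..}"
  have "(x, b) \<in> Dadm \<delta>" "(y, b) \<in> Dadm \<delta>" using x y assms by (auto simp: Dadm_iff[OF d0 d1])
  then have "Rf \<delta> ((1 - t) *\<^sub>R (x, b) + t *\<^sub>R (y, b)) \<le> (1 - t) * Rf \<delta> (x, b) + t * Rf \<delta> (y, b)"
    using convex_onD[OF R_convex[OF d0 d1], of t "(x, b)" "(y, b)"] t by simp
  moreover have "(1 - t) *\<^sub>R (x, b) + t *\<^sub>R (y, b) = ((1 - t) * x + t * y, b)" by (simp add: algebra_simps)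
  ultimately show "Rfun \<delta> ((1 - t) *\<^sub>R x + t *\<^sub>R y) b \<le> (1 - t) * Rfun \<delta> x b + t * Rfun \<delta> y b"
    by (simp only: Rf_def[OF d0 d1] fst_conv snd_conv real_scaleR_def)
qed

lemma slice_x_convex: assumes "\<delta>/2 \<le> a" shows "convex_on {0..} (\<lambda>t. Rfun \<delta> a t)"
proof (rule convex_onI)
  show "convex {0::real..}" by simp
  fix t x y :: real assume t: "0 < t" "t < 1" and x: "x \<in> {0..}" and y: "y \<in> {0..}"
  have "(a, x) \<in> Dadm \<delta>" "(a, y) \<in> Dadm \<delta>" using x y assms by (auto simp: Dadm_iff[OF d0 d1])
  then have "Rf \<delta> ((1 - t) *\<^sub>R (a, x) + t *\<^sub>R (a, y)) \<le> (1 - t) * Rf \<delta> (a, x) + t * Rf \<delta> (a, y)"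
    using convex_onD[OF R_convex[OF d0 d1], of t "(a, x)" "(a, y)"] t by simp
  moreover have "(1 - t) *\<^sub>R (a, x) + t *\<^sub>R (a, y) = (a, (1 - t) * x + t * y)" by (simp add: algebra_simps)
  ultimately show "Rfun \<delta> a ((1 - t) *\<^sub>R x + t *\<^sub>R y) \<le> (1 - t) * Rfun \<delta> a x + t * Rfun \<delta> a y"
    by (simp only: Rf_def[OF d0 d1] fst_conv snd_conv real_scaleR_def)
qed

lemma lambda_subg:
  assumes p: "(a, b) \<in> D_in \<delta>" and W: "W \<in> Pstar \<delta> a b"
  shows "subg \<delta> (a, b) (- lam_s \<delta> a b, - lam_x \<delta> a b)"
proof -
  have pint: "(a, b) \<in> interior (Dadm \<delta>)" by (rule Din_int[OF d0 d1 p])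
  have ab: "\<delta> / 2 < a" "0 < b" using int_Dadm[OF d0 d1 pint] by auto
  interpret gs: cvx1 "\<lambda>t. Rfun \<delta> t b" "\<delta>/2" a
    by unfold_locales (use slice_s_convex ab in auto)
  interpret gx: cvx1 "\<lambda>t. Rfun \<delta> a t" 0 b
    by unfold_locales (use slice_x_convex ab in auto)
  have cR: "convex_on (Dadm \<delta>) (Rf \<delta>)" by (rule R_convex[OF d0 d1])
  have cD: "convex (Dadm \<delta>)" by (rule convex_Dadm[OF d0 d1])
  have exs: "\<exists>v. fst v = c \<and> subg \<delta> (a, b) v" if c: "gs.Am \<le> c" "c \<le> gs.Ap" for c
  proof -
    have "\<exists>v. inner v (1, 0) = c \<and> (\<forall>q\<in>Dadm \<delta>. Rf \<delta> (a, b) + inner v (q - (a, b)) \<le> Rf \<delta> q)"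
    proof (rule subgrad_dir[OF cD cR pint])
      fix t assume "(a, b) + t *\<^sub>R (1, 0) \<in> Dadm \<delta>"
      then have "\<delta>/2 \<le> a + t" by (simp add: Dadm_iff[OF d0 d1])
      then show "Rf \<delta> (a, b) + c * t \<le> Rf \<delta> ((a, b) + t *\<^sub>R (1, 0))"
        using gs.tang[OF c] by (simp add: Rf_def[OF d0 d1])
    qed
    then obtain v where "inner v (1, 0) = c" "\<forall>q\<in>Dadm \<delta>. Rf \<delta> (a, b) + inner v (q - (a, b)) \<le> Rf \<delta> q" by blast
    then show ?thesis by (intro exI[of _ v]) (cases v, auto simp: subg_def[OF d0 d1])
  qed
  have exx: "\<exists>v. snd v = c \<and> subg \<delta> (a, b) v" if c: "gx.Am \<le> c" "c \<le> gx.Ap" for c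
  proof -
    have "\<exists>v. inner v (0, 1) = c \<and> (\<forall>q\<in>Dadm \<delta>. Rf \<delta> (a, b) + inner v (q - (a, b)) \<le> Rf \<delta> q)"
    proof (rule subgrad_dir[OF cD cR pint])
      fix t assume "(a, b) + t *\<^sub>R (0, 1) \<in> Dadm \<delta>"
      then have "0 \<le> b + t" by (simp add: Dadm_iff[OF d0 d1])
      then show "Rf \<delta> (a, b) + c * t \<le> Rf \<delta> ((a, b) + t *\<^sub>R (0, 1))"
        using gx.tang[OF c] by (simp add: Rf_def[OF d0 d1])
    qed
    then obtain v where "inner v (0, 1) = c" "\<forall>q\<in>Dadm \<delta>. Rf \<delta> (a, b) + inner v (q - (a, b)) \<le> Rf \<delta> q" by blast
    then show ?thesis by (intro exI[of _ v]) (cases v, auto simp: subg_def[OF d0 d1])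
  qed
  obtain v1 where v1: "fst v1 = gs.Ap" "subg \<delta> (a, b) v1" using exs[OF gs.Am_le_Ap order_refl] by blast
  obtain v2 where v2: "fst v2 = gs.Am" "subg \<delta> (a, b) v2" using exs[OF order_refl gs.Am_le_Ap] by blast
  obtain w1 where w1: "snd w1 = gx.Ap" "subg \<delta> (a, b) w1" using exx[OF gx.Am_le_Ap order_refl] by blast
  obtain w2 where w2: "snd w2 = gx.Am" "subg \<delta> (a, b) w2" using exx[OF order_refl gx.Am_le_Ap] by blast
  have u: "v1 = v2" "v1 = w1" "w1 = w2" using subg_unique[OF d0 d1 p W] v1 v2 w1 w2 by blast+
  have "gs.Am = gs.Ap" using u v1 v2 by simp
  then have ds: "DERIV (\<lambda>t. Rfun \<delta> t b) a :> gs.Ap" by (rule gs.deriv_eq)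
  have "gx.Am = gx.Ap" using u w1 w2 by simp
  then have dx: "DERIV (\<lambda>t. Rfun \<delta> a t) b :> gx.Ap" by (rule gx.deriv_eq)
  have "lam_s \<delta> a b = - gs.Ap" unfolding lam_s_def using DERIV_imp_deriv[OF ds] by simp
  moreover have "lam_x \<delta> a b = - gx.Ap" unfolding lam_x_def using DERIV_imp_deriv[OF dx] by simp
  moreover have "v1 = (gs.Ap, gx.Ap)" using u v1 w1 by (cases v1) auto
  ultimately show ?thesis using v1 by simp
qed

lemma lambda_facts:
  assumes p: "(a, b) \<in> D_in \<delta>" and W: "W \<in> Pstar \<delta> a b"
  shows "0 \<le> lam_s \<delta> a b" "0 \<le> lam_x \<delta> a b"
    "\<And>z y. (\<Sum>x\<in>UNIV. PX \<delta> x * exp (jX \<delta> W x a b + lam_s \<delta> a b * a + lam_x \<delta> a b * b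
        - lam_s \<delta> a b * dbar_s x z - lam_x \<delta> a b * d_x x y)) \<le> 1"
proof -
  let ?ls = "lam_s \<delta> a b" and ?lx = "lam_x \<delta> a b"
  have sg: "subg \<delta> (a, b) (- ?ls, - ?lx)" by (rule lambda_subg[OF p W])
  have pD: "(a, b) \<in> Dadm \<delta>" using Din_int[OF d0 d1 p] interior_subset by blast
  show "0 \<le> ?ls" "0 \<le> ?lx" using subg_nonpos[OF d0 d1 pD sg] by auto
  have Wmin: "\<And>V. FF \<delta> ?ls ?lx W \<le> FF \<delta> ?ls ?lx V" using subg_slack(3)[OF d0 d1 pD sg W] by simp
  fix z y
  let ?Q = "out_marg \<delta> W"
  have QW: "QW \<delta> W = ?Q" by (rule QW_def[OF d0 d1 Wmin])
  have Qd: "distr ?Q" using QW_distr[OF d0 d1 Wmin] QW by simp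
  have kkt: "(\<Sum>x\<in>UNIV. PX \<delta> x * (exp (- dst ?ls ?lx x (z, y)) / ZZ ?ls ?lx ?Q x)) \<le> 1"
    using KKT[OF d0 d1 Wmin, of "(z, y)"] QW by simp
  have j: "jX \<delta> W x a b = - (?ls * a + ?lx * b) - ln (ZZ ?ls ?lx ?Q x)" for x
  proof -
    have "(\<Sum>zy\<in>UNIV. ?Q zy * exp (?ls * a + ?lx * b - ?ls * dbar_s x (fst zy) - ?lx * d_x x (snd zy)))
        = exp (?ls * a + ?lx * b) * ZZ ?ls ?lx ?Q x"
      unfolding ZZ_def[OF d0 d1] dst_def[OF d0 d1]
      by (simp add: sum_distrib_left exp_diff exp_add exp_minus field_simps)
    moreover have zp: "ZZ ?ls ?lx ?Q x > 0" by (rule ZZ_pos[OF d0 d1 Qd])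
    ultimately show ?thesis unfolding jX_def by (simp add: ln_mult)
  qed
  have "exp (jX \<delta> W x a b + ?ls * a + ?lx * b - ?ls * dbar_s x z - ?lx * d_x x y)
      = exp (- dst ?ls ?lx x (z, y)) / ZZ ?ls ?lx ?Q x" for x
  proof -
    have zp: "ZZ ?ls ?lx ?Q x > 0" by (rule ZZ_pos[OF d0 d1 Qd])
    show ?thesis unfolding j dst_def[OF d0 d1] using zp
      by (simp add: exp_diff exp_minus exp_add field_simps)
  qed
  then show "(\<Sum>x\<in>UNIV. PX \<delta> x * exp (jX \<delta> W x a b + ?ls * a + ?lx * b - ?ls * dbar_s x z - ?lx * d_x x y)) \<le> 1"
    using kkt by simp
qed

end


lemma pmf_efcf:
  assumes "0 \<le> \<delta>" "\<delta> \<le> 1"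
  shows "pmf (efcf \<delta>) (s, x) = (case x of None \<Rightarrow> \<delta> / 2 | Some b \<Rightarrow> if b = s then (1 - \<delta>) / 2 else 0)"
proof -
  have "efcf \<delta> = bind_pmf (bernoulli_pmf (1/2)) (\<lambda>s. map_pmf (\<lambda>er. (s, if er then None else Some s)) (bernoulli_pmf \<delta>))"
    unfolding efcf_def map_pmf_def by (simp add: bind_assoc_pmf bind_return_pmf)
  then show ?thesis using assms
    by (cases s) (auto simp: pmf_bind pmf_map prob_bernoulli_set vimage_def split: option.splits if_splits)
qed

definition Kc :: "((nat \<Rightarrow> sym) \<Rightarrow> nat pmf) \<Rightarrow> (nat \<Rightarrow> ((nat \<Rightarrow> bool) \<times> (nat \<Rightarrow> sym)) pmf) \<Rightarrow> (nat \<Rightarrow> sym) \<Rightarrow> ((nat \<Rightarrow> bool) \<times> (nat \<Rightarrow> sym)) pmf" where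
  "Kc enc dec x = bind_pmf (enc x) dec"

definition Jd :: "real \<Rightarrow> nat \<Rightarrow> ((nat \<Rightarrow> sym) \<Rightarrow> nat pmf) \<Rightarrow> (nat \<Rightarrow> ((nat \<Rightarrow> bool) \<times> (nat \<Rightarrow> sym)) pmf) \<Rightarrow> ((nat \<Rightarrow> bool \<times> sym) \<times> ((nat \<Rightarrow> bool) \<times> (nat \<Rightarrow> sym))) pmf" where
  "Jd \<delta> k enc dec = do { v \<leftarrow> efcf_block \<delta> k; u \<leftarrow> enc (\<lambda>i. snd (v i)); zy \<leftarrow> dec u; return_pmf (v, zy) }"

lemma J_alt: "Jd \<delta> k enc dec = bind_pmf (efcf_block \<delta> k) (\<lambda>v. map_pmf (Pair v) (Kc enc dec (\<lambda>i. snd (v i))))"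
  unfolding Jd_def Kc_def map_pmf_def by (simp add: bind_assoc_pmf)

lemma pmf_map_Pair: "pmf (map_pmf (Pair v') q) (v, zy) = (if v' = v then pmf q zy else 0)"
proof (cases "v' = v")
  case True
  then show ?thesis using pmf_map_inj'[of "Pair v'" q zy] by (simp add: inj_on_def)
next
  case False
  then have "(v, zy) \<notin> set_pmf (map_pmf (Pair v') q)" by auto
  then show ?thesis using False by (simp add: set_pmf_eq)
qed

lemma pmf_J: "pmf (Jd \<delta> k enc dec) (v, zy) = pmf (efcf_block \<delta> k) v * pmf (Kc enc dec (\<lambda>i. snd (v i))) zy"
proof -
  have "pmf (Jd \<delta> k enc dec) (v, zy) = measure_pmf.expectation (efcf_block \<delta> k)
      (\<lambda>v'. pmf (map_pmf (Pair v') (Kc enc dec (\<lambda>i. snd (v' i)))) (v, zy))"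
    unfolding J_alt pmf_bind ..
  also have "\<dots> = measure_pmf.expectation (efcf_block \<delta> k) (\<lambda>v'. indicator {v} v' * pmf (Kc enc dec (\<lambda>i. snd (v i))) zy)"
    by (intro Bochner_Integration.integral_cong refl) (auto simp: pmf_map_Pair indicator_def)
  also have "\<dots> = measure (efcf_block \<delta> k) {v} * pmf (Kc enc dec (\<lambda>i. snd (v i))) zy"
    by simp
  finally show ?thesis by (simp add: measure_pmf_single)
qed

lemma map_fst_J: "map_pmf fst (Jd \<delta> k enc dec) = efcf_block \<delta> k"
  by (simp add: J_alt map_bind_pmf pmf.map_comp o_def map_pmf_const bind_return_pmf')

definition phi :: "nat \<Rightarrow> (nat \<Rightarrow> bool) \<Rightarrow> (nat \<Rightarrow> bool \<times> sym) \<Rightarrow> (nat \<Rightarrow> bool \<times> sym)" where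
  "phi k z v = (\<lambda>i. if i < k \<and> snd (v i) = None \<and> z i then (\<not> fst (v i), None) else v i)"

definition Phi :: "nat \<Rightarrow> (nat \<Rightarrow> bool \<times> sym) \<times> ((nat \<Rightarrow> bool) \<times> (nat \<Rightarrow> sym)) \<Rightarrow> (nat \<Rightarrow> bool \<times> sym) \<times> ((nat \<Rightarrow> bool) \<times> (nat \<Rightarrow> sym))" where
  "Phi k w = (phi k (fst (snd w)) (fst w), snd w)"

lemma phi_phi: "phi k z (phi k z v) = v"
  unfolding phi_def by (auto simp: fun_eq_iff prod_eq_iff)

lemma Phi_Phi: "Phi k (Phi k w) = w"
  unfolding Phi_def by (simp add: phi_phi)

lemma inj_Phi: "inj (Phi k)"
  by (metis Phi_Phi injI)

lemma snd_phi: "(\<lambda>i. snd (phi k z v i)) = (\<lambda>i. snd (v i))"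
  unfolding phi_def by auto

lemma pmf_block_phi:
  assumes "0 \<le> \<delta>" "\<delta> \<le> 1"
  shows "pmf (efcf_block \<delta> k) (phi k z v) = pmf (efcf_block \<delta> k) v"
proof -
  have out: "(\<forall>i. i \<notin> {..<k} \<longrightarrow> phi k z v i = (False, None)) \<longleftrightarrow> (\<forall>i. i \<notin> {..<k} \<longrightarrow> v i = (False, None))"
    by (auto simp: phi_def)
  have "pmf (efcf \<delta>) (phi k z v i) = pmf (efcf \<delta>) (v i)" for i
  proof -
    obtain s x where vi: "v i = (s, x)" by fastforce
    show ?thesis using vi assms by (cases x) (auto simp: phi_def pmf_efcf)
  qed
  then have prod: "(\<Prod>i\<in>{..<k}. pmf (efcf \<delta>) (phi k z v i)) = (\<Prod>i\<in>{..<k}. pmf (efcf \<delta>) (v i))" by simp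
  show ?thesis by (simp only: efcf_block_def pmf_Pi[OF finite_lessThan] out prod)
qed

lemma J_Phi:
  assumes "0 \<le> \<delta>" "\<delta> \<le> 1"
  shows "map_pmf (Phi k) (Jd \<delta> k enc dec) = Jd \<delta> k enc dec"
proof (rule pmf_eqI)
  fix w
  obtain v zy where w: "Phi k w = (v, zy)" by (cases "Phi k w") auto
  have "Phi k (v, zy) = w" using Phi_Phi[of k w] w by simp
  then have w2: "w = (phi k (fst zy) v, zy)" by (simp add: Phi_def)
  have "pmf (map_pmf (Phi k) (Jd \<delta> k enc dec)) w = pmf (Jd \<delta> k enc dec) (Phi k w)"
    using pmf_map_inj'[OF inj_Phi, of k "Jd \<delta> k enc dec" "Phi k w"] by (simp add: Phi_Phi)
  also have "\<dots> = pmf (Jd \<delta> k enc dec) (v, zy)" using w by simp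
  also have "\<dots> = pmf (efcf_block \<delta> k) v * pmf (Kc enc dec (\<lambda>i. snd (v i))) zy" by (rule pmf_J)
  also have "\<dots> = pmf (efcf_block \<delta> k) (phi k (fst zy) v) * pmf (Kc enc dec (\<lambda>i. snd (phi k (fst zy) v i))) zy"
    by (simp only: pmf_block_phi[OF assms] snd_phi)
  also have "\<dots> = pmf (Jd \<delta> k enc dec) (phi k (fst zy) v, zy)" by (rule pmf_J[symmetric])
  also have "\<dots> = pmf (Jd \<delta> k enc dec) w" using w2 by simp
  finally show "pmf (map_pmf (Phi k) (Jd \<delta> k enc dec)) w = pmf (Jd \<delta> k enc dec) w" .
qed

lemma set_block:
  assumes "0 \<le> \<delta>" "\<delta> \<le> 1" "v \<in> set_pmf (efcf_block \<delta> k)" "i < k" "snd (v i) = Some b"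
  shows "fst (v i) = b"
proof -
  have "pmf (efcf_block \<delta> k) v \<noteq> 0" using assms(3) by (simp add: set_pmf_eq)
  then have "(\<Prod>i\<in>{..<k}. pmf (efcf \<delta>) (v i)) \<noteq> 0"
    unfolding efcf_block_def pmf_Pi[OF finite_lessThan] by (auto split: if_splits)
  then have "pmf (efcf \<delta>) (v i) \<noteq> 0" using assms(4) by auto
  moreover obtain s where "v i = (s, Some b)" using assms(5) by (metis prod.collapse)
  ultimately show ?thesis using assms(1,2) by (auto simp: pmf_efcf split: if_splits)
qed

lemma flip_sym:
  fixes g :: "sym \<Rightarrow> real" and ls c :: real
  assumes d0: "0 \<le> \<delta>" and d1: "\<delta> \<le> 1"
  shows "measure_pmf.prob (Jd \<delta> k enc dec)
      {w. c \<le> (\<Sum>i<k. g (snd (fst w i)) + ls * (d_s (fst (fst w i)) (fst (snd w) i) - dbar_s (snd (fst w i)) (fst (snd w) i)))}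
    = measure_pmf.prob (efcf_block \<delta> k) {v. c \<le> (\<Sum>i<k. g (snd (v i)) + ls * (d_s (fst (v i)) False - dbar_s (snd (v i)) False))}"
  (is "measure_pmf.prob ?J ?B' = measure_pmf.prob ?mu ?B")
proof -
  have key: "Phi k w \<in> ?B' \<longleftrightarrow> fst w \<in> ?B" if wJ: "w \<in> set_pmf ?J" for w :: "(nat \<Rightarrow> bool \<times> sym) \<times> (nat \<Rightarrow> bool) \<times> (nat \<Rightarrow> sym)"
  proof -
    have vs: "fst w \<in> set_pmf ?mu" using wJ unfolding J_alt by auto
    have term_eq: "g (snd (fst (Phi k w) i)) + ls * (d_s (fst (fst (Phi k w) i)) (fst (snd (Phi k w)) i) - dbar_s (snd (fst (Phi k w) i)) (fst (snd (Phi k w)) i))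
        = g (snd (fst w i)) + ls * (d_s (fst (fst w i)) False - dbar_s (snd (fst w i)) False)" if i: "i < k" for i
    proof -
      obtain s x where vi: "fst w i = (s, x)" by fastforce
      show ?thesis
      proof (cases x)
        case None
        then show ?thesis using vi i by (cases s; cases "fst (snd w) i") (auto simp: Phi_def phi_def d_s_def dbar_s_def)
      next
        case (Some b)
        then have "s = b" using set_block[OF d0 d1 vs i, of b] vi by simp
        then show ?thesis using vi i Some by (cases s; cases "fst (snd w) i") (auto simp: Phi_def phi_def d_s_def dbar_s_def)
      qed
    qed
    have "(\<Sum>i<k. g (snd (fst (Phi k w) i)) + ls * (d_s (fst (fst (Phi k w) i)) (fst (snd (Phi k w)) i) - dbar_s (snd (fst (Phi k w) i)) (fst (snd (Phi k w)) i)))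
        = (\<Sum>i<k. g (snd (fst w i)) + ls * (d_s (fst (fst w i)) False - dbar_s (snd (fst w i)) False))"
      by (rule sum.cong) (auto simp: term_eq)
    then show ?thesis by simp
  qed
  have seteq: "Phi k -` ?B' \<inter> set_pmf ?J = (fst -` ?B) \<inter> set_pmf ?J"
    using key by blast
  have "measure_pmf.prob ?J ?B' = measure_pmf.prob (map_pmf (Phi k) ?J) ?B'" using J_Phi[OF d0 d1] by simp
  also have "\<dots> = measure_pmf.prob ?J (Phi k -` ?B')" by simp
  also have "\<dots> = measure_pmf.prob ?J (Phi k -` ?B' \<inter> set_pmf ?J)" by (simp add: measure_Int_set_pmf)
  also have "\<dots> = measure_pmf.prob ?J ((fst -` ?B) \<inter> set_pmf ?J)" using seteq by simp
  also have "\<dots> = measure_pmf.prob ?J (fst -` ?B)"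
    by (simp add: measure_Int_set_pmf)
  also have "\<dots> = measure_pmf.prob (map_pmf fst ?J) ?B" by simp
  also have "\<dots> = measure_pmf.prob ?mu ?B" by (simp add: map_fst_J)
  finally show ?thesis .
qed


lemma nn_swap_pmf:
  fixes A :: "'a pmf" and B :: "'b pmf"
  shows "(\<integral>\<^sup>+x. \<integral>\<^sup>+y. f x y \<partial>B \<partial>A) = (\<integral>\<^sup>+y. \<integral>\<^sup>+x. f x y \<partial>A \<partial>B)"
proof -
  have "(\<integral>\<^sup>+x. \<integral>\<^sup>+y. f x y \<partial>B \<partial>A) = (\<integral>\<^sup>+p. f (fst p) (snd p) \<partial>pair_pmf A B)"
    by (simp add: nn_integral_pair_pmf')
  also have "\<dots> = (\<integral>\<^sup>+q. f (snd q) (fst q) \<partial>pair_pmf B A)"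
    by (subst pair_commute_pmf) (simp add: case_prod_beta)
  also have "\<dots> = (\<integral>\<^sup>+y. \<integral>\<^sup>+x. f x y \<partial>A \<partial>B)"
    by (simp add: nn_integral_pair_pmf')
  finally show ?thesis .
qed

lemma int_letter:
  assumes d0: "0 \<le> \<delta>" and d1: "\<delta> \<le> 1"
    and hs: "(\<Sum>x\<in>UNIV. PX \<delta> x * exp (g x)) \<le> 1"
  shows "(\<integral>\<^sup>+w. ennreal (exp (g (snd w))) \<partial>efcf \<delta>) \<le> 1"
proof -
  have "(\<integral>\<^sup>+w. ennreal (exp (g (snd w))) \<partial>efcf \<delta>) = (\<integral>\<^sup>+x. ennreal (exp (g x)) \<partial>efcfX \<delta>)"
    unfolding efcfX_def by simp
  also have "\<dots> = (\<Sum>x\<in>UNIV. ennreal (exp (g x)) * pmf (efcfX \<delta>) x)"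
    by (rule nn_integral_measure_pmf_support) auto
  also have "\<dots> = (\<Sum>x\<in>UNIV. ennreal (PX \<delta> x * exp (g x)))"
  proof (rule sum.cong[OF refl])
    fix x
    have "ennreal (PX \<delta> x * exp (g x)) = ennreal (PX \<delta> x) * ennreal (exp (g x))"
      by (rule ennreal_mult) auto
    then show "ennreal (exp (g x)) * ennreal (PX \<delta> x) = ennreal (PX \<delta> x * exp (g x))"
      by (simp only: mult.commute)
  qed
  also have "\<dots> = ennreal (\<Sum>x\<in>UNIV. PX \<delta> x * exp (g x))"
    by (rule sum_ennreal) auto
  also have "\<dots> \<le> 1" using hs by simp
  finally show ?thesis .
qed

lemma int_bound:
  fixes h :: "sym \<Rightarrow> bool \<Rightarrow> sym \<Rightarrow> real"
  assumes d0: "0 \<le> \<delta>" and d1: "\<delta> \<le> 1"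
    and hs: "\<And>z y. (\<Sum>x\<in>UNIV. PX \<delta> x * exp (h x z y)) \<le> 1"
    and encs: "\<And>x. set_pmf (enc x) \<subseteq> {1..M}"
  shows "(\<integral>\<^sup>+w. ennreal (exp (\<Sum>i<k. h (snd (fst w i)) (fst (snd w) i) (snd (snd w) i))) \<partial>Jd \<delta> k enc dec) \<le> of_nat M"
proof -
  define F where "F = (\<lambda>(v :: nat \<Rightarrow> bool \<times> sym) (zy :: (nat \<Rightarrow> bool) \<times> (nat \<Rightarrow> sym)). ennreal (exp (\<Sum>i<k. h (snd (v i)) (fst zy i) (snd zy i))))"
  have inner: "(\<integral>\<^sup>+v. F v zy \<partial>efcf_block \<delta> k) \<le> 1" for zy
  proof -
    have "F v zy = (\<Prod>i\<in>{..<k}. ennreal (exp (h (snd (v i)) (fst zy i) (snd zy i))))" for v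
      unfolding F_def by (simp add: exp_sum prod_ennreal)
    then have "(\<integral>\<^sup>+v. F v zy \<partial>efcf_block \<delta> k) = (\<integral>\<^sup>+v. (\<Prod>i\<in>{..<k}. ennreal (exp (h (snd (v i)) (fst zy i) (snd zy i)))) \<partial>efcf_block \<delta> k)"
      by simp
    also have "\<dots> = (\<Prod>i\<in>{..<k}. \<integral>\<^sup>+w. ennreal (exp (h (snd w) (fst zy i) (snd zy i))) \<partial>efcf \<delta>)"
      unfolding efcf_block_def
      by (rule nn_integral_prod_Pi_pmf[where f="\<lambda>i w. ennreal (exp (h (snd w) (fst zy i) (snd zy i)))"]) simp
    also have "\<dots> \<le> 1"
      by (rule prod_le_1) (use int_letter[OF d0 d1 hs] in auto)
    finally show ?thesis .
  qed
  have encb: "(\<integral>\<^sup>+u. G u \<partial>enc x) \<le> (\<Sum>u\<in>{1..M}. G u)" for x G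
  proof -
    have "(\<integral>\<^sup>+u. G u \<partial>enc x) = (\<Sum>u\<in>{1..M}. G u * pmf (enc x) u)"
      using encs[of x] by (intro nn_integral_measure_pmf_support) auto
    also have "\<dots> \<le> (\<Sum>u\<in>{1..M}. G u)"
      by (intro sum_mono) (simp add: mult_left_le pmf_le_1)
    finally show ?thesis .
  qed
  have "(\<integral>\<^sup>+w. ennreal (exp (\<Sum>i<k. h (snd (fst w i)) (fst (snd w) i) (snd (snd w) i))) \<partial>Jd \<delta> k enc dec)
      = (\<integral>\<^sup>+v. \<integral>\<^sup>+u. \<integral>\<^sup>+zy. F v zy \<partial>dec u \<partial>enc (\<lambda>i. snd (v i)) \<partial>efcf_block \<delta> k)"
    unfolding Jd_def F_def by simp
  also have "\<dots> \<le> (\<integral>\<^sup>+v. (\<Sum>u\<in>{1..M}. \<integral>\<^sup>+zy. F v zy \<partial>dec u) \<partial>efcf_block \<delta> k)"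
    by (intro nn_integral_mono encb)
  also have "\<dots> = (\<Sum>u\<in>{1..M}. \<integral>\<^sup>+v. \<integral>\<^sup>+zy. F v zy \<partial>dec u \<partial>efcf_block \<delta> k)"
    by (rule nn_integral_sum) simp
  also have "\<dots> = (\<Sum>u\<in>{1..M}. \<integral>\<^sup>+zy. \<integral>\<^sup>+v. F v zy \<partial>efcf_block \<delta> k \<partial>dec u)"
    by (rule sum.cong[OF refl], rule nn_swap_pmf)
  also have "\<dots> \<le> (\<Sum>u\<in>{1..M}. \<integral>\<^sup>+zy. 1 \<partial>dec u)"
    by (intro sum_mono nn_integral_mono inner)
  also have "\<dots> = of_nat M" by simp
  finally show ?thesis .
qed


theorem theorem8:
  fixes \<delta> ds dx \<epsilon> :: real and k M :: nat
    and enc :: "(nat \<Rightarrow> sym) \<Rightarrow> nat pmf"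
    and dec :: "nat \<Rightarrow> ((nat \<Rightarrow> bool) \<times> (nat \<Rightarrow> sym)) pmf"
    and W :: chan
  assumes "0 \<le> \<delta>" and "\<delta> \<le> 1"
    and "(ds, dx) \<in> D_in \<delta>"
    and "is_code \<delta> k M ds dx \<epsilon> enc dec"
    and "W \<in> Pstar \<delta> ds dx"
  shows "(SUP \<gamma>\<in>{0..}.
           measure_pmf.prob (efcf_block \<delta> k)
             {v. (\<Sum>i<k. jX \<delta> W (snd (v i)) ds dx
                   + lam_s \<delta> ds dx * (d_s (fst (v i)) False - dbar_s (snd (v i)) False))
                 \<ge> \<gamma> + ln (real M)}
           - exp (- \<gamma>)) \<le> \<epsilon>"
proof -
  note d0 = assms(1) and d1 = assms(2) and p = assms(3) and W = assms(5)
  let ?ls = "lam_s \<delta> ds dx" and ?lx = "lam_x \<delta> ds dx"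
  let ?J = "Jd \<delta> k enc dec"
  define Err where "Err = ({(v, z, y). ds < blk_ds k (\<lambda>i. fst (v i)) z \<or> dx < blk_dx k (\<lambda>i. snd (v i)) y}
      :: ((nat \<Rightarrow> bool \<times> sym) \<times> (nat \<Rightarrow> bool) \<times> (nat \<Rightarrow> sym)) set)"
  have encs: "\<And>x. set_pmf (enc x) \<subseteq> {1..M}" and err: "measure_pmf.prob ?J Err \<le> \<epsilon>"
    using assms(4) unfolding is_code_def Jd_def Err_def by auto
  have M1: "1 \<le> M"
  proof -
    obtain u where "u \<in> set_pmf (enc (\<lambda>_. None))" using set_pmf_not_empty by fast
    then show ?thesis using encs[of "\<lambda>_. None"] by auto
  qed
  have ls0: "0 \<le> ?ls" and lx0: "0 \<le> ?lx" using lambda_facts[OF d0 d1 p W] by auto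
  define h where "h = (\<lambda>x z y. jX \<delta> W x ds dx + ?ls * ds + ?lx * dx - ?ls * dbar_s x z - ?lx * d_x x y)"
  have hs: "\<And>z y. (\<Sum>x\<in>UNIV. PX \<delta> x * exp (h x z y)) \<le> 1"
    unfolding h_def using lambda_facts(3)[OF d0 d1 p W] by blast
  have IB: "(\<integral>\<^sup>+w. ennreal (exp (\<Sum>i<k. h (snd (fst w i)) (fst (snd w) i) (snd (snd w) i))) \<partial>?J) \<le> of_nat M"
    by (rule int_bound[OF d0 d1 hs encs])
  show ?thesis
  proof (rule cSUP_least)
    show "{0::real..} \<noteq> {}" by auto
    fix \<gamma> :: real assume "\<gamma> \<in> {0..}"
    define c where "c = \<gamma> + ln (real M)"
    define B' where "B' = {w :: (nat \<Rightarrow> bool \<times> sym) \<times> (nat \<Rightarrow> bool) \<times> (nat \<Rightarrow> sym). c \<le> (\<Sum>i<k. jX \<delta> W (snd (fst w i)) ds dx + ?ls * (d_s (fst (fst w i)) (fst (snd w) i) - dbar_s (snd (fst w i)) (fst (snd w) i)))}"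
    have sym: "measure_pmf.prob (efcf_block \<delta> k)
             {v. (\<Sum>i<k. jX \<delta> W (snd (v i)) ds dx + ?ls * (d_s (fst (v i)) False - dbar_s (snd (v i)) False)) \<ge> \<gamma> + ln (real M)}
        = measure_pmf.prob ?J B'"
      unfolding B'_def c_def using flip_sym[OF d0 d1, where c = "\<gamma> + ln (real M)" and k = k and g = "\<lambda>x. jX \<delta> W x ds dx" and ls = ?ls and enc = enc and dec = dec] by simp
    have pt: "indicator (B' - Err) w \<le> ennreal (exp (- \<gamma>) / real M) * ennreal (exp (\<Sum>i<k. h (snd (fst w i)) (fst (snd w) i) (snd (snd w) i)))" for w
    proof (cases "w \<in> B' - Err")
      case False then show ?thesis by simp
    next
      case True
      obtain v z y where w: "w = (v, z, y)" by (cases w) auto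
      have cB: "c \<le> (\<Sum>i<k. jX \<delta> W (snd (v i)) ds dx + ?ls * (d_s (fst (v i)) (z i) - dbar_s (snd (v i)) (z i)))"
        using True w by (simp add: B'_def)
      have nE: "blk_ds k (\<lambda>i. fst (v i)) z \<le> ds" "blk_dx k (\<lambda>i. snd (v i)) y \<le> dx"
        using True w by (auto simp: Err_def)
      have sds: "(\<Sum>i<k. d_s (fst (v i)) (z i)) \<le> real k * ds"
      proof (cases "k = 0")
        case True then show ?thesis by simp
      next
        case False then show ?thesis using nE(1) by (simp add: blk_ds_def divide_le_eq mult.commute)
      qed
      have sdx: "(\<Sum>i<k. d_x (snd (v i)) (y i)) \<le> real k * dx"
      proof (cases "k = 0")
        case True then show ?thesis by simp
      next
        case False then show ?thesis using nE(2) by (simp add: blk_dx_def divide_le_eq mult.commute)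
      qed
      have hsum: "(\<Sum>i<k. h (snd (v i)) (z i) (y i)) = (\<Sum>i<k. jX \<delta> W (snd (v i)) ds dx + ?ls * (d_s (fst (v i)) (z i) - dbar_s (snd (v i)) (z i)))
          + ?ls * (real k * ds - (\<Sum>i<k. d_s (fst (v i)) (z i))) + ?lx * (real k * dx - (\<Sum>i<k. d_x (snd (v i)) (y i)))"
        unfolding h_def by (simp add: sum.distrib sum_subtractf sum_distrib_left algebra_simps)
      have "?ls * (real k * ds - (\<Sum>i<k. d_s (fst (v i)) (z i))) \<ge> 0" using ls0 sds by simp
      moreover have "?lx * (real k * dx - (\<Sum>i<k. d_x (snd (v i)) (y i))) \<ge> 0" using lx0 sdx by simp
      ultimately have hc: "c \<le> (\<Sum>i<k. h (snd (v i)) (z i) (y i))" using cB hsum by linarith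
      have Mp: "real M > 0" using M1 by simp
      have "1 \<le> exp ((\<Sum>i<k. h (snd (v i)) (z i) (y i)) - \<gamma> - ln (real M))" using hc by (simp add: c_def)
      also have "\<dots> = exp (- \<gamma>) / real M * exp (\<Sum>i<k. h (snd (v i)) (z i) (y i))"
        using Mp by (simp add: exp_diff exp_minus exp_add field_simps)
      finally have "1 \<le> exp (- \<gamma>) / real M * exp (\<Sum>i<k. h (snd (v i)) (z i) (y i))" .
      then have le: "ennreal 1 \<le> ennreal (exp (- \<gamma>) / real M * exp (\<Sum>i<k. h (snd (v i)) (z i) (y i)))"
        by (rule ennreal_leI)
      have eq: "ennreal (exp (- \<gamma>) / real M * exp (\<Sum>i<k. h (snd (v i)) (z i) (y i)))
          = ennreal (exp (- \<gamma>) / real M) * ennreal (exp (\<Sum>i<k. h (snd (v i)) (z i) (y i)))"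
        by (rule ennreal_mult) (use Mp in auto)
      have i1: "indicator (B' - Err) w = (1::ennreal)" using True by simp
      from le have "1 \<le> ennreal (exp (- \<gamma>) / real M) * ennreal (exp (\<Sum>i<k. h (snd (v i)) (z i) (y i)))"
        unfolding eq ennreal_1 .
      then show ?thesis using i1 w by simp
    qed
    have "emeasure ?J (B' - Err) = (\<integral>\<^sup>+w. indicator (B' - Err) w \<partial>?J)" by simp
    also have "\<dots> \<le> (\<integral>\<^sup>+w. ennreal (exp (- \<gamma>) / real M) * ennreal (exp (\<Sum>i<k. h (snd (fst w i)) (fst (snd w) i) (snd (snd w) i))) \<partial>?J)"
      by (intro nn_integral_mono pt)
    also have "\<dots> = ennreal (exp (- \<gamma>) / real M) * (\<integral>\<^sup>+w. ennreal (exp (\<Sum>i<k. h (snd (fst w i)) (fst (snd w) i) (snd (snd w) i))) \<partial>?J)"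
      by (rule nn_integral_cmult) simp
    also have "\<dots> \<le> ennreal (exp (- \<gamma>) / real M) * of_nat M"
      by (intro mult_left_mono IB) simp
    also have "\<dots> = ennreal (exp (- \<gamma>))"
      using M1 by (simp add: ennreal_of_nat_eq_real_of_nat ennreal_mult'[symmetric])
    finally have "emeasure ?J (B' - Err) \<le> ennreal (exp (- \<gamma>))" .
    then have small: "measure_pmf.prob ?J (B' - Err) \<le> exp (- \<gamma>)"
      by (simp add: measure_pmf.emeasure_eq_measure)
    have "measure_pmf.prob ?J B' \<le> measure_pmf.prob ?J (Err \<union> (B' - Err))"
      by (rule measure_pmf.finite_measure_mono) auto
    also have "\<dots> \<le> measure_pmf.prob ?J Err + measure_pmf.prob ?J (B' - Err)"
      by (rule measure_Un_le) auto
    finally have "measure_pmf.prob ?J B' \<le> \<epsilon> + exp (- \<gamma>)" using err small by linarith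
    then show "measure_pmf.prob (efcf_block \<delta> k)
             {v. (\<Sum>i<k. jX \<delta> W (snd (v i)) ds dx + ?ls * (d_s (fst (v i)) False - dbar_s (snd (v i)) False)) \<ge> \<gamma> + ln (real M)}
           - exp (- \<gamma>) \<le> \<epsilon>"
      using sym by simp
  qed
qed


end
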